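(* Let $\mu$ be a probability measure on $\mathbb{C}$ with compact support, and let $X_1, X_2, \ldots$ be iid random variables with distribution $\mu$. For each $n \ge 1$ let $\xi_1^{(n)}, \ldots, \xi_{k_n}^{(n)}$ be deterministic complex numbers, where $k_n \le K$ for some constant $K$ independent of $n$, and assume $\max\{|\xi_1^{(n)}|, \ldots, |\xi_{k_n}^{(n)}|\} \le B$ for some constant $B$ independent of $n$. Fix $\varepsilon > 0$ and a nonnegative integer $s$, and suppose that for all sufficiently large $n$: none of $\xi_1^{(n)}, \ldots, \xi_{k_n}^{(n)}$ lies in $N_\mu(3\varepsilon)\setminus N_\mu(\varepsilon)$, the $s$ values $\xi_1^{(n)}, \ldots, \xi_s^{(n)}$ lie outside $N_\mu(3\varepsilon)$, and the remaining values $\xi_{s+1}^{(n)},\ldots,\xi_{k_n}^{(n)}$ lie in $N_\mu(\varepsilon)$. Then, almost surely, for all sufficiently large $n$, the polynomial \[ p_n(z) := \prod_{j=1}^{n-k_n} (z - X_j) \prod_{l=1}^{k_n} (z - \xi_l^{(n)}) \] has exactly $s$ critical points (counted with multiplicity) outside $N_\mu(2\varepsilon)$, and these can be labeled $w_1(p_n), \ldots, w_s(p_n)$ so that $\max_{1 \le l \le s}|w_l(p_n) - \xi_l^{(n)}| \to 0$ as $n\to\infty$.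
   Context: For a probability measure $\mu$ on $\mathbb{C}$, $m_\mu(z) := \int_{\mathbb{C}} \frac{d\mu(x)}{z-x}$ for $z \notin \operatorname{supp}(\mu)$; $M_\mu := \{ z \in \mathbb{C}\setminus \operatorname{supp}(\mu) : m_\mu(z) = 0\}$; and $N_\mu(\varepsilon) := \{ z \in \mathbb{C} : \operatorname{dist}(z, \operatorname{supp}(\mu) \cup M_\mu) < \varepsilon\}$. A critical point of a polynomial is a zero of its derivative. *)

theory Defs
  imports "HOL-Probability.Probability" "HOL-Computational_Algebra.Polynomial"
begin

definition msupp :: "complex measure \<Rightarrow> complex set" where
  "msupp \<mu> = {x. \<forall>r>0. emeasure \<mu> (ball x r) > 0}"

definition cauchy_transform :: "complex measure \<Rightarrow> complex \<Rightarrow> complex" where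
  "cauchy_transform \<mu> z = integral\<^sup>L \<mu> (\<lambda>x. 1 / (z - x))"

definition Mzeros :: "complex measure \<Rightarrow> complex set" where
  "Mzeros \<mu> = {z. z \<notin> msupp \<mu> \<and> cauchy_transform \<mu> z = 0}"

definition Nbhd :: "complex measure \<Rightarrow> real \<Rightarrow> complex set" where
  "Nbhd \<mu> \<epsilon> = {z. infdist z (msupp \<mu> \<union> Mzeros \<mu>) < \<epsilon>}"

definition crit_mult :: "complex poly \<Rightarrow> complex \<Rightarrow> nat" where
  "crit_mult p z = order z (pderiv p)"

end

theory Submission
  imports Defs "HOL-Complex_Analysis.Complex_Analysis"
begin

lemma zorder_poly:
  fixes p :: "complex poly"
  assumes "p \<noteq> 0"
  shows "zorder (poly p) z = int (order z p)"
proof -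
  obtain q where q: "p = [:- z, 1:] ^ order z p * q" and nd: "\<not> [:- z, 1:] dvd q"
    using order_decomp[OF assms] by blast
  have qz: "poly q z \<noteq> 0" using nd by (simp add: dvd_iff_poly_eq_0)
  show ?thesis
  proof (rule zorder_eqI[where S=UNIV and g="poly q"])
    show "poly q holomorphic_on UNIV" by (auto intro: holomorphic_intros)
    fix w assume "w \<noteq> z"
    show "poly p w = poly q w * (w - z) powi int (order z p)"
      by (subst q) (simp add: power_int_of_nat mult.commute)
  qed (use qz in auto)
qed

lemma order_prod_linear:
  fixes a :: "'i \<Rightarrow> complex"
  assumes "finite I"
  shows "order z (\<Prod>i\<in>I. [:- a i, 1:]) = card {i\<in>I. a i = z}"
  using assms
proof (induction I rule: finite_induct)
  case empty
  then show ?case by (simp add: order_0I)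
next
  case (insert j I)
  have nz: "(\<Prod>i\<in>I. [:- a i, 1:]) \<noteq> 0" using insert by auto
  have "order z (\<Prod>i\<in>insert j I. [:- a i, 1:]) = order z ([:- a j, 1:] * (\<Prod>i\<in>I. [:- a i, 1:]))"
    using insert by simp
  also have "\<dots> = order z [:- a j, 1:] + order z (\<Prod>i\<in>I. [:- a i, 1:])"
    using nz by (intro order_mult) (metis mult_eq_0_iff pCons_eq_0_iff one_neq_zero)
  also have "order z [:- a j, 1:] = (if a j = z then 1 else 0)"
  proof (cases "a j = z")
    case True then show ?thesis using order_power_n_n[of z 1] by simp
  next
    case False
    have "poly [:- a j, 1:] z \<noteq> 0" using False by simp
    then show ?thesis using False by (simp add: order_0I)
  qed
  finally have e: "order z (\<Prod>i\<in>insert j I. [:- a i, 1:]) = (if a j = z then 1 else 0) + card {i\<in>I. a i = z}"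
    using insert by simp
  have "{i\<in>insert j I. a i = z} = (if a j = z then insert j {i\<in>I. a i = z} else {i\<in>I. a i = z})"
    by auto
  then show ?case using insert e by auto
qed

lemma logderiv_prod_linear:
  fixes a :: "'i \<Rightarrow> complex"
  assumes "finite I" "\<forall>i\<in>I. z \<noteq> a i"
  shows "poly (pderiv (\<Prod>i\<in>I. [:- a i, 1:])) z = poly (\<Prod>i\<in>I. [:- a i, 1:]) z * (\<Sum>i\<in>I. 1 / (z - a i))"
  using assms
proof (induction I rule: finite_induct)
  case empty
  then show ?case by simp
next
  case (insert j I)
  define P where "P = (\<Prod>i\<in>I. [:- a i, 1:])"
  have nz: "z - a j \<noteq> 0" using insert by auto
  have e1: "(\<Prod>i\<in>insert j I. [:- a i, 1:]) = [:- a j, 1:] * P" using insert by (simp add: P_def)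
  have d1: "pderiv [:- a j, 1:] = 1" by (simp add: pderiv_pCons)
  have "poly (pderiv ([:- a j, 1:] * P)) z = (z - a j) * poly (pderiv P) z + poly P z"
    unfolding pderiv_mult poly_add poly_mult d1 by simp
  also have "poly (pderiv P) z = poly P z * (\<Sum>i\<in>I. 1 / (z - a i))" using insert by (simp add: P_def)
  finally have "poly (pderiv ([:- a j, 1:] * P)) z = (z - a j) * (poly P z * (\<Sum>i\<in>I. 1 / (z - a i))) + poly P z" .
  also have "\<dots> = poly ([:- a j, 1:] * P) z * (1 / (z - a j) + (\<Sum>i\<in>I. 1 / (z - a i)))"
    using nz by (simp add: field_simps)
  finally show ?case unfolding e1 using insert by simp
qed

lemma sum_inv_nonzero_far:
  fixes a :: "'i \<Rightarrow> complex"
  assumes "finite I" "I \<noteq> {}" "\<forall>i\<in>I. norm (a i) \<le> \<rho>" "norm z > 2 * \<rho>"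
  shows "(\<Sum>i\<in>I. 1 / (z - a i)) \<noteq> 0"
proof -
  have zpos: "z \<noteq> 0" using assms(4) assms(2,3) by (metis all_not_in_conv norm_ge_zero norm_zero order.trans not_le mult_nonneg_nonneg zero_le_numeral)
  have pos: "Re (z * (1 / (z - a i))) > 0" if "i \<in> I" for i
  proof -
    define w where "w = a i / z"
    have nw: "norm w < 1/2"
      using assms(3,4) that zpos by (auto simp: w_def norm_divide field_simps)
    have eq: "z * (1 / (z - a i)) = 1 / (1 - w)"
      using zpos by (auto simp: w_def field_simps)
    have "Re (1 - w) > 0" using nw abs_Re_le_cmod[of w] by auto
    then have d: "(1 - Re w) * (1 - Re w) + Im w * Im w > 0"
      by (simp add: add_pos_nonneg)
    have "(1 - Re w) / ((1 - Re w) * (1 - Re w) + Im w * Im w) > 0"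
      using d \<open>Re (1 - w) > 0\<close> by (intro divide_pos_pos) auto
    then show ?thesis unfolding eq by (simp add: Re_divide cmod_power2 power2_eq_square)
  qed
  have "Re (z * (\<Sum>i\<in>I. 1 / (z - a i))) > 0"
    unfolding sum_distrib_left Re_sum using assms(1,2) pos by (intro sum_pos) auto
  then show ?thesis by (intro notI) simp
qed

lemma Rouche_poly_disc:
  fixes f g :: "complex poly"
  assumes "f \<noteq> 0" "f + g \<noteq> 0" "R > 0"
    and less: "\<And>z. norm (z - c) = R \<Longrightarrow> norm (poly g z) < norm (poly f z)"
  shows "(\<Sum>z\<in>{z\<in>ball c R. poly (f + g) z = 0}. order z (f + g))
       = (\<Sum>z\<in>{z\<in>ball c R. poly f z = 0}. order z f)"
proof -
  define \<gamma> where "\<gamma> = circlepath c R"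
  have fin1: "finite {p. poly (f + g) p = 0}" using poly_roots_finite[OF assms(2)] .
  have fin2: "finite {p. poly f p = 0}" using poly_roots_finite[OF assms(1)] .
  have R: "(\<Sum>p\<in>{p\<in>UNIV. (\<lambda>p. poly f p + poly g p) p = 0}. winding_number \<gamma> p * zorder (\<lambda>p. poly f p + poly g p) p)
          = (\<Sum>p\<in>{p\<in>UNIV. poly f p = 0}. winding_number \<gamma> p * zorder (poly f) p)"
  proof (rule Rouche_theorem)
    show "finite {p \<in> UNIV. poly f p + poly g p = 0}" using fin1 by simp
    show "finite {p \<in> UNIV. poly f p = 0}" using fin2 by simp
    show "\<forall>z\<in>path_image \<gamma>. cmod (poly g z) < cmod (poly f z)"
      using less assms(3) by (auto simp: \<gamma>_def dist_norm norm_minus_commute)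
  qed (auto simp: \<gamma>_def intro: holomorphic_intros)
  have wn: "winding_number \<gamma> p = (if p \<in> ball c R then 1 else 0)" if "norm (p - c) \<noteq> R" for p
  proof (cases "p \<in> ball c R")
    case True
    then show ?thesis unfolding \<gamma>_def
      by (simp add: winding_number_circlepath dist_norm norm_minus_commute)
  next
    case False
    then have "p \<notin> cball c R" using that by (auto simp: dist_norm norm_minus_commute)
    then have "winding_number \<gamma> p = 0" unfolding \<gamma>_def
      by (intro winding_number_zero_outside[OF _ convex_cball]) (auto simp: valid_path_imp_path assms(3) less_imp_le[OF assms(3)] sphere_def)
    then show ?thesis using False by simp
  qed
  have fg: "(\<lambda>p. poly f p + poly g p) = poly (f + g)" by auto
  have setEq1: "{p\<in>UNIV. poly f p + poly g p = 0} = {p. poly (f+g) p = 0}" by simp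
  have setEq2: "{p\<in>UNIV. poly f p = 0} = {p. poly f p = 0}" by simp
  have nz1: "norm (p - c) \<noteq> R" if "poly (f + g) p = 0" for p
  proof
    assume "norm (p - c) = R"
    then have "norm (poly g p) < norm (poly f p)" by (rule less)
    moreover have "poly g p = - poly f p" using that by (simp add: eq_neg_iff_add_eq_0 add.commute)
    ultimately show False by simp
  qed
  have nz2: "norm (p - c) \<noteq> R" if "poly f p = 0" for p
    using less[of p] that by auto
  have L: "(\<Sum>p\<in>{p\<in>UNIV. (\<lambda>p. poly f p + poly g p) p = 0}. winding_number \<gamma> p * zorder (\<lambda>p. poly f p + poly g p) p)
     = of_nat (\<Sum>z\<in>{z\<in>ball c R. poly (f + g) z = 0}. order z (f + g))"
  proof -
    have "(\<Sum>p\<in>{p\<in>UNIV. (\<lambda>p. poly f p + poly g p) p = 0}. winding_number \<gamma> p * zorder (\<lambda>p. poly f p + poly g p) p)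
       = (\<Sum>p\<in>{p. poly (f+g) p = 0}. (if p \<in> ball c R then of_nat (order p (f+g)) else 0))"
      unfolding setEq1 fg
    proof (intro sum.cong refl)
      fix p assume "p \<in> {p. poly (f+g) p = 0}"
      then have "poly (f+g) p = 0" by simp
      then have w: "winding_number \<gamma> p = (if p \<in> ball c R then 1 else 0)" by (intro wn nz1)
      show "winding_number \<gamma> p * of_int (zorder (poly (f+g)) p) = (if p \<in> ball c R then of_nat (order p (f+g)) else 0)"
        unfolding w zorder_poly[OF assms(2)] by simp
    qed
    also have "\<dots> = (\<Sum>p\<in>{p. poly (f+g) p = 0} \<inter> ball c R. of_nat (order p (f+g)))"
      by (subst sum.inter_restrict[OF fin1]) (auto intro: sum.cong)
    also have "{p. poly (f+g) p = 0} \<inter> ball c R = {z\<in>ball c R. poly (f + g) z = 0}" by auto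
    finally show ?thesis by (simp only: of_nat_sum)
  qed
  have L2: "(\<Sum>p\<in>{p\<in>UNIV. poly f p = 0}. winding_number \<gamma> p * zorder (poly f) p)
     = of_nat (\<Sum>z\<in>{z\<in>ball c R. poly f z = 0}. order z f)"
  proof -
    have "(\<Sum>p\<in>{p\<in>UNIV. poly f p = 0}. winding_number \<gamma> p * zorder (poly f) p)
       = (\<Sum>p\<in>{p. poly f p = 0}. (if p \<in> ball c R then of_nat (order p f) else 0))"
      unfolding setEq2
    proof (intro sum.cong refl)
      fix p assume "p \<in> {p. poly f p = 0}"
      then have "poly f p = 0" by simp
      then have w: "winding_number \<gamma> p = (if p \<in> ball c R then 1 else 0)" by (intro wn nz2)
      show "winding_number \<gamma> p * of_int (zorder (poly f) p) = (if p \<in> ball c R then of_nat (order p f) else 0)"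
        unfolding w zorder_poly[OF assms(1)] by simp
    qed
    also have "\<dots> = (\<Sum>p\<in>{p. poly f p = 0} \<inter> ball c R. of_nat (order p f))"
      by (subst sum.inter_restrict[OF fin2]) (auto intro: sum.cong)
    also have "{p. poly f p = 0} \<inter> ball c R = {z\<in>ball c R. poly f z = 0}" by auto
    finally show ?thesis by (simp only: of_nat_sum)
  qed
  have "(of_nat (\<Sum>z\<in>{z\<in>ball c R. poly (f + g) z = 0}. order z (f + g)) :: complex)
      = of_nat (\<Sum>z\<in>{z\<in>ball c R. poly f z = 0}. order z f)"
    by (rule trans[OF L[symmetric] trans[OF R L2]])
  then show ?thesis by (simp only: of_nat_eq_iff)
qed

lemma gap_scale:
  fixes \<xi> :: "'i \<Rightarrow> complex" and \<rho> :: real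
  assumes "finite I" "card I \<le> s" "\<rho> > 0"
  shows "\<exists>r. \<rho> / 4 ^ (s * s + 1) \<le> r \<and> r \<le> \<rho> / 4 \<and>
             (\<forall>i\<in>I. \<forall>j\<in>I. dist (\<xi> i) (\<xi> j) < r \<or> dist (\<xi> i) (\<xi> j) \<ge> 4 * r)"
proof (rule ccontr)
  assume H: "\<not> ?thesis"
  define r where "r t = \<rho> / 4 ^ (t+1)" for t :: nat
  have bad: "\<exists>p\<in>I\<times>I. r t \<le> dist (\<xi> (fst p)) (\<xi> (snd p)) \<and> dist (\<xi> (fst p)) (\<xi> (snd p)) < 4 * r t"
    if "t \<le> s * s" for t
  proof -
    have p1: "(4::real)^(t+1) \<le> 4^(s * s + 1)" using that by (intro power_increasing) auto
    have p2: "(4::real)^1 \<le> 4^(t+1)" by (intro power_increasing) auto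
    have "\<rho> / 4 ^ (s * s + 1) \<le> r t"
      unfolding r_def using assms(3) p1 by (intro divide_left_mono) auto
    moreover have "r t \<le> \<rho> / 4 ^ 1" unfolding r_def using assms(3) p2
      by (intro divide_left_mono) auto
    then have "r t \<le> \<rho> / 4" by simp
    ultimately have "\<not> (\<forall>i\<in>I. \<forall>j\<in>I. dist (\<xi> i) (\<xi> j) < r t \<or> dist (\<xi> i) (\<xi> j) \<ge> 4 * r t)"
      using H by blast
    then obtain i j where "i \<in> I" "j \<in> I" "\<not> (dist (\<xi> i) (\<xi> j) < r t \<or> dist (\<xi> i) (\<xi> j) \<ge> 4 * r t)"
      by blast
    then show ?thesis by (intro bexI[of _ "(i,j)"]) auto
  qed
  then have "\<forall>t. \<exists>p. t \<le> s * s \<longrightarrow> p \<in> I\<times>I \<and> r t \<le> dist (\<xi> (fst p)) (\<xi> (snd p))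
        \<and> dist (\<xi> (fst p)) (\<xi> (snd p)) < 4 * r t" by blast
  then have "\<exists>f. \<forall>t. t \<le> s * s \<longrightarrow> f t \<in> I\<times>I \<and> r t \<le> dist (\<xi> (fst (f t))) (\<xi> (snd (f t)))
        \<and> dist (\<xi> (fst (f t))) (\<xi> (snd (f t))) < 4 * r t" by (rule choice)
  then obtain f where f: "\<And>t. t \<le> s * s \<Longrightarrow> f t \<in> I\<times>I \<and> r t \<le> dist (\<xi> (fst (f t))) (\<xi> (snd (f t)))
        \<and> dist (\<xi> (fst (f t))) (\<xi> (snd (f t))) < 4 * r t"
    by blast
  have r4: "4 * r t' \<le> r t" if "t < t'" for t t'
  proof -
    have "4 * r t' = \<rho> / 4 ^ t'" unfolding r_def by (simp add: field_simps)
    also have "\<dots> \<le> \<rho> / 4 ^ (t+1)"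
    proof -
      have p: "(4::real)^(t+1) \<le> 4^t'" using that by (intro power_increasing) auto
      show ?thesis using assms(3) p by (intro divide_left_mono) auto
    qed
    finally show ?thesis unfolding r_def .
  qed
  have inj: "inj_on f {..s * s}"
  proof (rule inj_onI)
    fix t t' assume t: "t \<in> {..s * s}" "t' \<in> {..s * s}" and eq: "f t = f t'"
    show "t = t'"
    proof (rule ccontr)
      assume "t \<noteq> t'"
      then consider "t < t'" | "t' < t" by linarith
      then show False
      proof cases
        case 1 then show ?thesis using f[of t] f[of t'] t eq r4[OF 1] by auto
      next
        case 2 then show ?thesis using f[of t] f[of t'] t eq r4[OF 2] by auto
      qed
    qed
  qed
  have "f ` {..s * s} \<subseteq> I \<times> I"
  proof (rule image_subsetI)
    fix t assume "t \<in> {..s * s}" then show "f t \<in> I \<times> I" using f[of t] by simp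
  qed
  then have "card (f ` {..s * s}) \<le> card (I \<times> I)" using assms(1) by (intro card_mono) auto
  also have "\<dots> = card I * card I" by (simp add: card_cartesian_product)
  also have "\<dots> \<le> s * s" using assms(2) by (intro mult_mono) auto
  finally show False using card_image[OF inj] by simp
qed

lemma matching_exists:
  fixes a :: "'i \<Rightarrow> 'k" and b :: "'z \<Rightarrow> 'k"
  assumes "finite I" "\<And>k. card {i\<in>I. a i = k} = size (filter_mset (\<lambda>z. b z = k) Z)"
  shows "\<exists>w. image_mset w (mset_set I) = Z \<and> (\<forall>i\<in>I. b (w i) = a i)"
  using assms
proof (induction I arbitrary: Z rule: finite_induct)
  case empty
  have "Z = {#}"
  proof (rule ccontr)
    assume "Z \<noteq> {#}"
    then obtain z where z: "z \<in># Z" by auto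
    have "size (filter_mset (\<lambda>x. b x = b z) Z) = 0" using empty(1)[of "b z"] by simp
    then show False using z by (auto simp: filter_mset_eq_conv size_eq_0_iff_empty)
  qed
  then show ?case by simp
next
  case (insert j I)
  have "size (filter_mset (\<lambda>z. b z = a j) Z) = card {i\<in>insert j I. a i = a j}"
    using insert(4) by simp
  also have "\<dots> > 0" using insert(1) by (auto simp: card_gt_0_iff)
  finally have "size (filter_mset (\<lambda>z. b z = a j) Z) > 0" .
  then have "filter_mset (\<lambda>z. b z = a j) Z \<noteq> {#}" by (intro notI) simp
  then obtain z where "z \<in># filter_mset (\<lambda>z. b z = a j) Z" by blast
  then have z: "z \<in># Z" "b z = a j" by auto
  define Z' where "Z' = Z - {#z#}"
  have Zeq: "Z = add_mset z Z'" using z(1) by (simp add: Z'_def)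
  have cnt: "card {i\<in>I. a i = k} = size (filter_mset (\<lambda>z. b z = k) Z')" for k
  proof -
    have c1: "card {i\<in>insert j I. a i = k} = (if a j = k then 1 else 0) + card {i\<in>I. a i = k}"
    proof (cases "a j = k")
      case True
      then have "{i\<in>insert j I. a i = k} = insert j {i\<in>I. a i = k}" by auto
      then show ?thesis using True insert(1,2) by simp
    next
      case False
      then have "{i\<in>insert j I. a i = k} = {i\<in>I. a i = k}" by auto
      then show ?thesis using False by simp
    qed
    have c2: "size (filter_mset (\<lambda>z. b z = k) Z) = (if a j = k then 1 else 0) + size (filter_mset (\<lambda>z. b z = k) Z')"
      unfolding Zeq using z(2) by simp
    show ?thesis using insert(4)[of k] c1 c2 by simp
  qed
  obtain w where w: "image_mset w (mset_set I) = Z'" "\<forall>i\<in>I. b (w i) = a i"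
    using insert(3)[OF cnt] by blast
  define w' where "w' = w(j := z)"
  have "image_mset w' (mset_set (insert j I)) = add_mset z (image_mset w' (mset_set I))"
    using insert(1,2) by (simp add: w'_def)
  also have "image_mset w' (mset_set I) = image_mset w (mset_set I)"
    using insert(2) by (intro image_mset_cong) (auto simp: w'_def insert(1))
  finally have "image_mset w' (mset_set (insert j I)) = Z" using w(1) Zeq by simp
  moreover have "\<forall>i\<in>insert j I. b (w' i) = a i" using w(2) z(2) insert(2) by (auto simp: w'_def)
  ultimately show ?case by blast
qed

lemma diagonal_choice:
  fixes G :: "nat \<Rightarrow> 'a \<Rightarrow> bool" and E :: "nat \<Rightarrow> 'a \<Rightarrow> real"
  assumes "\<And>\<delta>. \<delta> > 0 \<Longrightarrow> eventually (\<lambda>n. \<exists>w. G n w \<and> E n w < \<delta>) sequentially"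
  shows "\<exists>W. eventually (\<lambda>n. G n (W n)) sequentially \<and> (\<forall>\<delta>>0. eventually (\<lambda>n. E n (W n) < \<delta>) sequentially)"
proof -
  have "\<forall>m. \<exists>N. \<forall>n\<ge>N. \<exists>w. G n w \<and> E n w < 1 / (real m + 1)"
    using assms by (auto simp: eventually_sequentially)
  then obtain N where N: "\<And>m n. n \<ge> N m \<Longrightarrow> \<exists>w. G n w \<and> E n w < 1 / (real m + 1)" by metis
  define A where "A n = {m. m \<le> n \<and> (\<forall>i\<le>m. N i \<le> n)}" for n
  have memA: "m \<in> A n \<longleftrightarrow> m \<le> n \<and> (\<forall>i\<le>m. N i \<le> n)" for m n by (simp add: A_def)
  have finA: "finite (A n)" for n
  proof (rule finite_subset)
    show "A n \<subseteq> {..n}" using memA by auto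
  qed auto
  define W where "W n = (SOME w. G n w \<and> E n w < 1 / (real (Max (A n)) + 1))" for n
  have good: "G n (W n) \<and> E n (W n) < 1 / (real (Max (A n)) + 1)" if "n \<ge> N 0" for n
  proof -
    have "0 \<in> A n" using that by (simp add: memA)
    then have "Max (A n) \<in> A n" using finA by (intro Max_in) auto
    then have "N (Max (A n)) \<le> n" unfolding memA by simp
    then have "\<exists>w. G n w \<and> E n w < 1 / (real (Max (A n)) + 1)" by (rule N)
    then show ?thesis unfolding W_def by (rule someI_ex)
  qed
  have ev1: "eventually (\<lambda>n. G n (W n)) sequentially"
    unfolding eventually_sequentially using good by blast
  have ev2: "eventually (\<lambda>n. E n (W n) < \<delta>) sequentially" if hd: "\<delta> > 0" for \<delta>
  proof -
    obtain m :: nat where m0: "inverse (real (Suc m)) < \<delta>"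
      using reals_Archimedean[OF hd] by blast
    then have m: "1 / (real m + 1) < \<delta>" by (simp add: inverse_eq_divide add.commute)
    define M where "M = max m (max (N 0) (Max (N ` {..m})))"
    show ?thesis unfolding eventually_sequentially
    proof (intro exI allI impI)
      fix n assume n: "M \<le> n"
      have "N i \<le> n" if "i \<le> m" for i
      proof -
        have "N i \<le> Max (N ` {..m})" using that by (intro Max_ge) auto
        also have "\<dots> \<le> M" unfolding M_def by linarith
        finally show ?thesis using n by linarith
      qed
      moreover have "m \<le> n" using n unfolding M_def by linarith
      ultimately have "m \<in> A n" unfolding memA by blast
      then have "m \<le> Max (A n)" using finA by auto
      then have "1 / (real (Max (A n)) + 1) \<le> 1 / (real m + 1)"
        by (intro divide_left_mono) auto
      moreover have "n \<ge> N 0" using n by (simp add: M_def)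
      ultimately show "E n (W n) < \<delta>" using good[of n] m by linarith
    qed
  qed
  show ?thesis using ev1 ev2 by blast
qed

lemma count_sum_replicate:
  assumes "finite A"
  shows "count (\<Sum>z\<in>A. replicate_mset (f z) z) x = (if x \<in> A then f x else 0)"
proof -
  have "count (\<Sum>z\<in>A. replicate_mset (f z) z) x = (\<Sum>z\<in>A. if x = z then f z else 0)"
    by (simp add: count_sum)
  also have "\<dots> = (if x \<in> A then f x else 0)"
    using assms by (simp add: sum.delta' )
  finally show ?thesis .
qed

lemma filter_replicate_mset':
  "filter_mset Q (replicate_mset n a) = (if Q a then replicate_mset n a else {#})"
  by (induction n) auto

lemma size_filter_sum_replicate:
  assumes "finite A"
  shows "size (filter_mset Q (\<Sum>z\<in>A. replicate_mset (f z) z)) = (\<Sum>z\<in>{z\<in>A. Q z}. f z)"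
  using assms
proof (induction A rule: finite_induct)
  case empty
  then show ?case by simp
next
  case (insert a A)
  have e: "{z \<in> insert a A. Q z} = (if Q a then insert a {z\<in>A. Q z} else {z\<in>A. Q z})" by auto
  show ?case
  proof (cases "Q a")
    case True
    have "finite {z\<in>A. Q z}" "a \<notin> {z\<in>A. Q z}" using insert by auto
    note fa = this
    have s1: "{z \<in> insert a A. Q z} = insert a {z\<in>A. Q z}" using True by auto
    have "size (filter_mset Q (\<Sum>z\<in>insert a A. replicate_mset (f z) z)) = f a + size (filter_mset Q (\<Sum>z\<in>A. replicate_mset (f z) z))"
      using insert True by (simp add: filter_replicate_mset')
    also have "\<dots> = f a + sum f {z\<in>A. Q z}" using insert.IH by simp
    also have "\<dots> = sum f {z \<in> insert a A. Q z}" unfolding s1 using fa by simp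
    finally show ?thesis .
  next
    case False
    have s1: "{z \<in> insert a A. Q z} = {z\<in>A. Q z}" using False by auto
    show ?thesis unfolding s1 using insert False by (simp add: filter_replicate_mset')
  qed
qed

lemma clusters_exist:
  fixes \<xi> :: "nat \<Rightarrow> complex"
  assumes "finite I" "r > 0"
    and gap: "\<forall>i\<in>I. \<forall>j\<in>I. dist (\<xi> i) (\<xi> j) < r \<or> dist (\<xi> i) (\<xi> j) \<ge> 4 * r"
  shows "\<exists>cen. (\<forall>l\<in>I. cen l \<in> \<xi> ` I \<and> dist (cen l) (\<xi> l) < r)
     \<and> (\<forall>l\<in>I. \<forall>l'\<in>I. cen l \<noteq> cen l' \<longrightarrow> dist (cen l) (cen l') \<ge> 4 * r)
     \<and> (\<forall>i\<in>I. \<forall>l\<in>I. dist (\<xi> i) (cen l) < 2 * r \<longrightarrow> cen i = cen l)"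
proof -
  have trans: "dist (\<xi> a) (\<xi> c) < r" if "a \<in> I" "b \<in> I" "c \<in> I" "dist (\<xi> a) (\<xi> b) < r" "dist (\<xi> b) (\<xi> c) < r" for a b c
  proof -
    have "dist (\<xi> a) (\<xi> c) \<le> dist (\<xi> a) (\<xi> b) + dist (\<xi> b) (\<xi> c)" by (rule dist_triangle)
    then have "dist (\<xi> a) (\<xi> c) < 4 * r" using that assms(2) by linarith
    then show ?thesis using gap that(1,3) by force
  qed
  define rep where "rep l = (LEAST i. i \<in> I \<and> dist (\<xi> i) (\<xi> l) < r)" for l
  have rep1: "rep l \<in> I \<and> dist (\<xi> (rep l)) (\<xi> l) < r" if "l \<in> I" for l
  proof -
    have "l \<in> I \<and> dist (\<xi> l) (\<xi> l) < r" using that assms(2) by simp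
    then show ?thesis unfolding rep_def by (rule LeastI)
  qed
  have rep2: "rep l = rep l'" if "l \<in> I" "l' \<in> I" "dist (\<xi> l) (\<xi> l') < r" for l l'
  proof -
    have "(\<lambda>i. i \<in> I \<and> dist (\<xi> i) (\<xi> l) < r) = (\<lambda>i. i \<in> I \<and> dist (\<xi> i) (\<xi> l') < r)"
    proof (intro ext iffI)
      fix i assume "i \<in> I \<and> dist (\<xi> i) (\<xi> l) < r"
      then show "i \<in> I \<and> dist (\<xi> i) (\<xi> l') < r" using trans[of i l l'] that by auto
    next
      fix i assume "i \<in> I \<and> dist (\<xi> i) (\<xi> l') < r"
      moreover have "dist (\<xi> l') (\<xi> l) < r" using that(3) by (simp add: dist_commute)
      ultimately show "i \<in> I \<and> dist (\<xi> i) (\<xi> l) < r" using trans[of i l' l] that by auto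
    qed
    then show ?thesis unfolding rep_def by simp
  qed
  define cen where "cen l = \<xi> (rep l)" for l
  have c1: "\<forall>l\<in>I. cen l \<in> \<xi> ` I \<and> dist (cen l) (\<xi> l) < r"
    using rep1 unfolding cen_def by auto
  have c3: "cen i = cen l" if "i \<in> I" "l \<in> I" "dist (\<xi> i) (cen l) < 2 * r" for i l
  proof -
    have rl: "rep l \<in> I" "dist (\<xi> (rep l)) (\<xi> l) < r" using rep1[OF that(2)] by auto
    have "dist (\<xi> i) (\<xi> (rep l)) < 4 * r" using that(3) assms(2) unfolding cen_def by linarith
    then have "dist (\<xi> i) (\<xi> (rep l)) < r" using gap that(1) rl(1) by force
    then have "dist (\<xi> i) (\<xi> l) < r" using trans[of i "rep l" l] that rl by auto
    then show ?thesis unfolding cen_def using rep2 that(1,2) by metis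
  qed
  have c2: "dist (cen l) (cen l') \<ge> 4 * r" if "l \<in> I" "l' \<in> I" "cen l \<noteq> cen l'" for l l'
  proof (rule ccontr)
    assume "\<not> ?thesis"
    then have "dist (cen l) (cen l') < 4 * r" by simp
    moreover have "rep l \<in> I" "rep l' \<in> I" using rep1 that by auto
    ultimately have "dist (cen l) (cen l') < r" using gap unfolding cen_def by force
    then have "dist (\<xi> (rep l)) (\<xi> l') < r"
      using trans[of "rep l" "rep l'" l'] rep1[OF that(1)] rep1[OF that(2)] that by (auto simp: cen_def)
    moreover have "dist (\<xi> l) (\<xi> (rep l)) < r" using rep1[OF that(1)] by (simp add: dist_commute)
    ultimately have "dist (\<xi> l) (\<xi> l') < r" using trans[of l "rep l" l'] rep1[OF that(1)] that by auto
    then have "cen l = cen l'" unfolding cen_def using rep2 that(1,2) by metis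
    then show False using that(3) by simp
  qed
  show ?thesis using c1 c2 c3 by blast
qed

lemma core_count:
  fixes E C :: "complex poly" and \<xi> :: "nat \<Rightarrow> complex" and W :: "complex set" and Ou :: "complex \<Rightarrow> bool"
  assumes finI: "finite I"
    and C_def: "C = (\<Prod>l\<in>I. [:- \<xi> l, 1:])"
    and W_O: "\<And>z. z \<in> W \<Longrightarrow> Ou z"
    and GL: "\<And>z. Ou z \<Longrightarrow> z \<notin> W \<Longrightarrow> poly (pderiv (E * C)) z \<noteq> 0"
    and EW: "\<And>z. z \<in> W \<Longrightarrow> poly E z \<noteq> 0 \<and> L * norm (poly E z) \<le> norm (poly (pderiv E) z)"
    and ballW: "\<And>l z. l \<in> I \<Longrightarrow> dist z (\<xi> l) \<le> 2 * r \<Longrightarrow> z \<in> W"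
    and gap: "\<forall>i\<in>I. \<forall>j\<in>I. dist (\<xi> i) (\<xi> j) < r \<or> dist (\<xi> i) (\<xi> j) \<ge> 4 * r"
    and rpos: "r > 0" and Lr: "real (card I) < L * r" and rd: "3 * r \<le> \<delta>"
  shows "\<exists>w. (\<forall>l\<in>I. Ou (w l))
           \<and> (\<forall>z. Ou z \<longrightarrow> count (image_mset w (mset_set I)) z = order z (pderiv (E * C)))
           \<and> (\<forall>l\<in>I. norm (w l - \<xi> l) < \<delta>)"
proof -
  define P' where "P' = pderiv (E * C)"
  define f where "f = pderiv E * C"
  define g where "g = E * pderiv C"
  have P'eq: "P' = f + g" unfolding P'_def f_def g_def by (simp add: pderiv_mult algebra_simps)
  have Lpos: "L > 0"
  proof -
    have "0 < L * r" using Lr by (metis of_nat_0_le_iff le_less_trans)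
    then show ?thesis using rpos by (simp add: zero_less_mult_iff)
  qed
  have pEnz: "poly (pderiv E) z \<noteq> 0" if "z \<in> W" for z
  proof -
    have "poly E z \<noteq> 0" "L * norm (poly E z) \<le> norm (poly (pderiv E) z)" using EW[OF that] by auto
    moreover have "0 < L * norm (poly E z)" using Lpos \<open>poly E z \<noteq> 0\<close> by simp
    ultimately have "0 < norm (poly (pderiv E) z)" by linarith
    then show ?thesis by simp
  qed
  have key: "norm (poly g z) < norm (poly f z)" if zW: "z \<in> W" and far: "\<forall>i\<in>I. dist z (\<xi> i) \<ge> r" for z
  proof -
    have ne: "\<forall>i\<in>I. z \<noteq> \<xi> i" using far rpos by auto
    have Cz: "poly C z \<noteq> 0" unfolding C_def poly_prod using ne finI by auto
    have Ez: "poly E z \<noteq> 0" and E': "L * norm (poly E z) \<le> norm (poly (pderiv E) z)" using EW[OF zW] by auto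
    have ld: "poly (pderiv C) z = poly C z * (\<Sum>i\<in>I. 1 / (z - \<xi> i))"
      unfolding C_def by (rule logderiv_prod_linear[OF finI ne])
    have "norm (\<Sum>i\<in>I. 1 / (z - \<xi> i)) \<le> (\<Sum>i\<in>I. norm (1 / (z - \<xi> i)))" by (rule norm_sum)
    also have "\<dots> \<le> (\<Sum>i\<in>I. 1 / r)"
    proof (rule sum_mono)
      fix i assume "i \<in> I"
      then have "r \<le> norm (z - \<xi> i)" using far by (simp add: dist_norm)
      then show "norm (1 / (z - \<xi> i)) \<le> 1 / r" using rpos by (simp add: norm_divide frac_le)
    qed
    also have "\<dots> = real (card I) / r" by simp
    also have "\<dots> < L" using Lr rpos by (simp add: divide_less_eq)
    finally have S: "norm (\<Sum>i\<in>I. 1 / (z - \<xi> i)) < L" .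
    have "norm (poly g z) = norm (poly E z) * norm (poly C z) * norm (\<Sum>i\<in>I. 1 / (z - \<xi> i))"
      unfolding g_def by (simp add: ld norm_mult)
    also have "\<dots> < norm (poly E z) * norm (poly C z) * L"
      using S Ez Cz by (intro mult_strict_left_mono) auto
    also have "\<dots> = (L * norm (poly E z)) * norm (poly C z)" by simp
    also have "\<dots> \<le> norm (poly (pderiv E) z) * norm (poly C z)"
      using E' by (intro mult_right_mono) auto
    also have "\<dots> = norm (poly f z)" unfolding f_def by (simp add: norm_mult)
    finally show ?thesis .
  qed
  have nz: "poly P' z \<noteq> 0" if "z \<in> W" "\<forall>i\<in>I. dist z (\<xi> i) \<ge> r" for z
  proof
    assume "poly P' z = 0"
    then have "poly g z = - poly f z" unfolding P'eq by (simp add: eq_neg_iff_add_eq_0 add.commute)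
    then show False using key[OF that] by simp
  qed
  obtain cen where c1: "\<forall>l\<in>I. cen l \<in> \<xi> ` I \<and> dist (cen l) (\<xi> l) < r"
    and c2: "\<forall>l\<in>I. \<forall>l'\<in>I. cen l \<noteq> cen l' \<longrightarrow> dist (cen l) (cen l') \<ge> 4 * r"
    and c3: "\<forall>i\<in>I. \<forall>l\<in>I. dist (\<xi> i) (cen l) < 2 * r \<longrightarrow> cen i = cen l"
    using clusters_exist[OF finI rpos gap] by blast
  have inball: "\<exists>l\<in>I. dist z (cen l) < 2 * r" if "Ou z" "poly P' z = 0" for z
  proof (rule ccontr)
    assume H: "\<not> ?thesis"
    have zW: "z \<in> W" using GL that unfolding P'_def by blast
    have "\<forall>i\<in>I. dist z (\<xi> i) \<ge> r"
    proof
      fix i assume i: "i \<in> I"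
      have "dist z (cen i) \<le> dist z (\<xi> i) + dist (\<xi> i) (cen i)" by (rule dist_triangle)
      moreover have "dist (\<xi> i) (cen i) < r" using c1 i by (simp add: dist_commute)
      moreover have "dist z (cen i) \<ge> 2 * r" using H i by auto
      ultimately show "dist z (\<xi> i) \<ge> r" by linarith
    qed
    then show False using nz[OF zW] that(2) by blast
  qed
  have uniq: "cen l = cen l'" if "l \<in> I" "l' \<in> I" "dist z (cen l) < 2 * r" "dist z (cen l') < 2 * r" for z l l'
  proof (rule ccontr)
    assume "cen l \<noteq> cen l'"
    then have "dist (cen l) (cen l') \<ge> 4 * r" using c2 that(1,2) by blast
    moreover have "dist (cen l) (cen l') \<le> dist z (cen l) + dist z (cen l')" by (rule dist_triangle3)
    ultimately show False using that(3,4) by linarith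
  qed
  have ballW': "z \<in> W" if lI: "l \<in> I" and dz: "dist z (cen l) \<le> 2 * r" for l z
  proof -
    obtain i where "i \<in> I" "cen l = \<xi> i" using c1 lI by auto
    then show ?thesis using ballW[of i z] dz by simp
  qed
  have farpt: "\<forall>i\<in>I. dist z (\<xi> i) \<ge> r" if "l \<in> I" "dist z (cen l) = 2 * r" for l z
  proof
    fix i assume i: "i \<in> I"
    have ci: "dist (\<xi> i) (cen i) < r" using c1 i by (simp add: dist_commute)
    show "dist z (\<xi> i) \<ge> r"
    proof (cases "cen i = cen l")
      case True
      have "dist z (cen i) \<le> dist z (\<xi> i) + dist (\<xi> i) (cen i)" by (rule dist_triangle)
      moreover have "dist z (cen i) = 2 * r" using True that(2) by simp
      ultimately show ?thesis using ci by linarith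
    next
      case False
      have "dist (cen i) (cen l) \<ge> 4 * r" using c2 i that(1) False by blast
      moreover have "dist (cen i) (cen l) \<le> dist (cen i) (\<xi> i) + dist (\<xi> i) z + dist z (cen l)"
        using dist_triangle[of "cen i" "cen l" "\<xi> i"] dist_triangle[of "\<xi> i" "cen l" z] by linarith
      ultimately show ?thesis using that(2) ci by (simp add: dist_commute)
    qed
  qed
  have circ: "norm (poly g z) < norm (poly f z)" if "l \<in> I" "norm (z - cen l) = 2 * r" for l z
  proof -
    have d: "dist z (cen l) = 2 * r" using that(2) by (simp add: dist_norm)
    show ?thesis using key[OF ballW'[OF that(1)] farpt[OF that(1) d]] d by simp
  qed
  have fgnz: "f \<noteq> 0 \<and> f + g \<noteq> 0" if "l \<in> I" for l
  proof -
    define z0 where "z0 = cen l + of_real (2 * r)"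
    have "norm (z0 - cen l) = 2 * r" using rpos by (simp add: z0_def)
    then have lt: "norm (poly g z0) < norm (poly f z0)" by (rule circ[OF that])
    have "f \<noteq> 0" using lt by auto
    moreover have "poly (f + g) z0 \<noteq> 0"
    proof
      assume "poly (f + g) z0 = 0"
      then have "poly g z0 = - poly f z0" by (simp add: eq_neg_iff_add_eq_0 add.commute)
      then show False using lt by simp
    qed
    moreover have "f + g \<noteq> 0"
    proof
      assume "f + g = 0"
      then have "poly (f + g) z0 = 0" by simp
      then show False using \<open>poly (f + g) z0 \<noteq> 0\<close> by simp
    qed
    ultimately show ?thesis by blast
  qed
  have cluster_count: "(\<Sum>z\<in>{z\<in>ball (cen l) (2 * r). poly P' z = 0}. order z P') = card {i\<in>I. cen i = cen l}"
    if l: "l \<in> I" for l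
  proof -
    have fnz: "f \<noteq> 0" and fgz: "f + g \<noteq> 0" using fgnz[OF l] by auto
    have "(\<Sum>z\<in>{z\<in>ball (cen l) (2 * r). poly P' z = 0}. order z P')
        = (\<Sum>z\<in>{z\<in>ball (cen l) (2 * r). poly f z = 0}. order z f)"
      unfolding P'eq
      by (rule Rouche_poly_disc[OF fnz fgz]) (use rpos circ[OF l] in auto)
    also have "\<dots> = (\<Sum>z\<in>\<xi> ` {i\<in>I. \<xi> i \<in> ball (cen l) (2 * r)}. card {i\<in>{i\<in>I. \<xi> i \<in> ball (cen l) (2 * r)}. \<xi> i = z})"
    proof (rule sum.cong)
      have "poly f z = 0 \<longleftrightarrow> poly C z = 0" if "z \<in> ball (cen l) (2 * r)" for z
      proof -
        have "z \<in> W" using ballW'[OF l] that by (simp add: dist_commute)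
        then have "poly (pderiv E) z \<noteq> 0" by (rule pEnz)
        then show ?thesis unfolding f_def by simp
      qed
      moreover have "poly C z = 0 \<longleftrightarrow> (\<exists>i\<in>I. \<xi> i = z)" for z
        unfolding C_def poly_prod using finI by (auto simp: prod_zero_iff)
      ultimately show "{z \<in> ball (cen l) (2 * r). poly f z = 0} = \<xi> ` {i \<in> I. \<xi> i \<in> ball (cen l) (2 * r)}"
        by auto
    next
      fix z assume z: "z \<in> \<xi> ` {i \<in> I. \<xi> i \<in> ball (cen l) (2 * r)}"
      then have zb: "z \<in> ball (cen l) (2 * r)" by auto
      have "z \<in> W" using ballW'[OF l] zb by (simp add: dist_commute)
      then have pE: "poly (pderiv E) z \<noteq> 0" by (rule pEnz)
      have "order z f = order z (pderiv E) + order z C"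
        unfolding f_def by (rule order_mult) (use fnz in \<open>simp add: f_def\<close>)
      also have "order z (pderiv E) = 0" using pE by (rule order_0I)
      also have "order z C = card {i\<in>I. \<xi> i = z}" unfolding C_def by (rule order_prod_linear[OF finI])
      also have "{i\<in>I. \<xi> i = z} = {i\<in>{i\<in>I. \<xi> i \<in> ball (cen l) (2 * r)}. \<xi> i = z}" using zb by auto
      finally show "order z f = card {i\<in>{i\<in>I. \<xi> i \<in> ball (cen l) (2 * r)}. \<xi> i = z}" by simp
    qed
    also have "\<dots> = card {i\<in>I. \<xi> i \<in> ball (cen l) (2 * r)}"
    proof -
      define J where "J = {i\<in>I. \<xi> i \<in> ball (cen l) (2 * r)}"
      have fJ: "finite J" using finI by (auto simp: J_def)
      have "card J = (\<Sum>y\<in>\<xi> ` J. card {x\<in>J. \<xi> x = y})"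
        unfolding card_eq_sum by (rule sum.image_gen[OF fJ])
      then show ?thesis unfolding J_def by simp
    qed
    also have "{i\<in>I. \<xi> i \<in> ball (cen l) (2 * r)} = {i\<in>I. cen i = cen l}"
    proof (intro Collect_cong conj_cong refl)
      fix i assume i: "i \<in> I"
      have ci: "dist (\<xi> i) (cen i) < r" using c1 i by (simp add: dist_commute)
      show "(\<xi> i \<in> ball (cen l) (2 * r)) = (cen i = cen l)"
      proof
        assume "\<xi> i \<in> ball (cen l) (2 * r)"
        then have "dist (cen l) (\<xi> i) < 2 * r" by (simp only: mem_ball)
        then have "dist (\<xi> i) (cen l) < 2 * r" by (simp only: dist_commute)
        then show "cen i = cen l" using c3 i l by blast
      next
        assume "cen i = cen l"
        then have "dist (\<xi> i) (cen l) < r" using ci by simp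
        then have "dist (cen l) (\<xi> i) < 2 * r" using rpos by (simp add: dist_commute)
        then show "\<xi> i \<in> ball (cen l) (2 * r)" by (simp only: mem_ball)
      qed
    qed
    finally show ?thesis .
  qed
  define Zset where "Zset = {z. Ou z \<and> poly P' z = 0}"
  have finZ: "finite Zset"
  proof (cases "I = {}")
    case True
    then have "Zset = {}" using inball unfolding Zset_def by auto
    then show ?thesis by simp
  next
    case False
    then obtain l where "l \<in> I" by auto
    then have "P' \<noteq> 0" using fgnz P'eq by auto
    then have "finite {z. poly P' z = 0}" by (rule poly_roots_finite)
    then show ?thesis by (rule finite_subset[rotated]) (auto simp: Zset_def)
  qed
  define Z where "Z = (\<Sum>z\<in>Zset. replicate_mset (order z P') z)"
  have cntZ: "count Z x = (if x \<in> Zset then order x P' else 0)" for x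
    unfolding Z_def by (rule count_sum_replicate[OF finZ])
  define b where "b z = (SOME c. c \<in> cen ` I \<and> dist z c < 2 * r)" for z
  have bprop: "b z \<in> cen ` I \<and> dist z (b z) < 2 * r" if "z \<in> Zset" for z
  proof -
    have "\<exists>c. c \<in> cen ` I \<and> dist z c < 2 * r" using inball that unfolding Zset_def by blast
    then show ?thesis unfolding b_def by (rule someI_ex)
  qed
  have match: "card {i\<in>I. cen i = k} = size (filter_mset (\<lambda>z. b z = k) Z)" for k
  proof -
    have "size (filter_mset (\<lambda>z. b z = k) Z) = (\<Sum>z\<in>{z\<in>Zset. b z = k}. order z P')"
      unfolding Z_def by (rule size_filter_sum_replicate[OF finZ])
    also have "\<dots> = card {i\<in>I. cen i = k}"
    proof (cases "k \<in> cen ` I")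
      case True
      then obtain l where l: "l \<in> I" "k = cen l" by auto
      have "{z\<in>Zset. b z = k} = {z\<in>ball (cen l) (2 * r). poly P' z = 0}"
      proof (intro set_eqI iffI)
        fix z assume "z \<in> {z\<in>Zset. b z = k}"
        then show "z \<in> {z\<in>ball (cen l) (2 * r). poly P' z = 0}"
          using bprop[of z] l unfolding Zset_def by (auto simp: dist_commute)
      next
        fix z assume z: "z \<in> {z\<in>ball (cen l) (2 * r). poly P' z = 0}"
        then have "z \<in> W" using ballW'[OF l(1)] by (auto simp: dist_commute)
        then have zZ: "z \<in> Zset" using z W_O unfolding Zset_def by auto
        then obtain l' where l': "l' \<in> I" "b z = cen l'" "dist z (cen l') < 2 * r" using bprop[of z] by auto
        have "cen l' = cen l" using uniq[OF l'(1) l(1) l'(3)] z by (auto simp: dist_commute)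
        then show "z \<in> {z\<in>Zset. b z = k}" using zZ l l' by auto
      qed
      then show ?thesis using cluster_count[OF l(1)] l by simp
    next
      case False
      have "{z\<in>Zset. b z = k} = {}" using bprop False by auto
      moreover have "{i\<in>I. cen i = k} = {}" using False by auto
      ultimately show ?thesis by (simp only: sum.empty card.empty)
    qed
    finally show ?thesis by simp
  qed
  obtain w where w1: "image_mset w (mset_set I) = Z" and w2: "\<forall>i\<in>I. b (w i) = cen i"
    using matching_exists[OF finI match] by blast
  have wZ: "w i \<in> Zset" if "i \<in> I" for i
  proof -
    have "w i \<in># image_mset w (mset_set I)" using that finI by auto
    then have "count Z (w i) > 0" using w1 by simp
    then show ?thesis using cntZ by (auto split: if_splits)
  qed
  have r1: "\<forall>l\<in>I. Ou (w l)" using wZ unfolding Zset_def by auto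
  have r2: "\<forall>z. Ou z \<longrightarrow> count (image_mset w (mset_set I)) z = order z (pderiv (E * C))"
  proof (intro allI impI)
    fix z assume Oz: "Ou z"
    show "count (image_mset w (mset_set I)) z = order z (pderiv (E * C))"
    proof (cases "z \<in> Zset")
      case True then show ?thesis using w1 cntZ by (simp add: P'_def)
    next
      case False
      then have "poly P' z \<noteq> 0" using Oz unfolding Zset_def by auto
      then have "order z P' = 0" by (rule order_0I)
      then show ?thesis using w1 cntZ False by (simp add: P'_def)
    qed
  qed
  have r3: "\<forall>l\<in>I. norm (w l - \<xi> l) < \<delta>"
  proof
    fix l assume l: "l \<in> I"
    have "dist (w l) (cen l) < 2 * r" using bprop[OF wZ[OF l]] w2 l by simp
    moreover have "dist (cen l) (\<xi> l) < r" using c1 l by simp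
    moreover have "dist (w l) (\<xi> l) \<le> dist (w l) (cen l) + dist (cen l) (\<xi> l)" by (rule dist_triangle)
    ultimately show "norm (w l - \<xi> l) < \<delta>" using rd by (simp add: dist_norm)
  qed
  show ?thesis using r1 r2 r3 by blast
qed

lemma logderiv_mult:
  fixes F G :: "complex poly"
  assumes "poly (pderiv F) z = poly F z * a" "poly (pderiv G) z = poly G z * b"
  shows "poly (pderiv (F * G)) z = poly (F * G) z * (a + b)"
  using assms by (simp add: pderiv_mult algebra_simps)

lemma Re_pos_far:
  fixes a z :: complex
  assumes "norm a \<le> \<rho>" "norm z > 2 * \<rho>"
  shows "Re (z * (1 / (z - a))) > 0"
proof -
  have "\<rho> \<ge> 0" using assms(1) norm_ge_zero order.trans by blast
  then have zpos: "z \<noteq> 0" using assms(2) by auto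
  define w where "w = a / z"
  have nw: "norm w < 1/2"
    using assms zpos by (auto simp: w_def norm_divide field_simps)
  have eq: "z * (1 / (z - a)) = 1 / (1 - w)"
    using zpos by (auto simp: w_def field_simps)
  have "Re (1 - w) > 0" using nw abs_Re_le_cmod[of w] by auto
  then have d: "(1 - Re w) * (1 - Re w) + Im w * Im w > 0"
    by (simp add: add_pos_nonneg)
  have "(1 - Re w) / ((1 - Re w) * (1 - Re w) + Im w * Im w) > 0"
    using d \<open>Re (1 - w) > 0\<close> by (intro divide_pos_pos) auto
  then show ?thesis unfolding eq by (simp add: Re_divide cmod_power2 power2_eq_square)
qed

lemma Re_sum_pos_far:
  fixes a :: "'i \<Rightarrow> complex"
  assumes "finite I" "\<forall>i\<in>I. norm (a i) \<le> \<rho>" "norm z > 2 * \<rho>"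
  shows "Re (z * (\<Sum>i\<in>I. 1 / (z - a i))) \<ge> 0"
    and "I \<noteq> {} \<Longrightarrow> Re (z * (\<Sum>i\<in>I. 1 / (z - a i))) > 0"
proof -
  have pos: "\<And>i. i \<in> I \<Longrightarrow> Re (z * (1 / (z - a i))) > 0" using Re_pos_far assms(2,3) by blast
  show "Re (z * (\<Sum>i\<in>I. 1 / (z - a i))) \<ge> 0"
    unfolding sum_distrib_left Re_sum using pos by (intro sum_nonneg) (auto intro: less_imp_le)
  show "I \<noteq> {} \<Longrightarrow> Re (z * (\<Sum>i\<in>I. 1 / (z - a i))) > 0"
    unfolding sum_distrib_left Re_sum using pos assms(1) by (intro sum_pos) auto
qed

context
  fixes \<mu> :: "complex measure" and x :: "nat \<Rightarrow> complex" and m :: "complex \<Rightarrow> complex"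
    and \<xi> :: "nat \<Rightarrow> nat \<Rightarrow> complex" and k :: "nat \<Rightarrow> nat"
    and K :: nat and B :: real and \<epsilon> :: real and s :: nat and RS R0 c :: real and T :: "complex set"
  assumes T_def: "T = msupp \<mu> \<union> Mzeros \<mu>"
    and xT: "\<And>j. x j \<in> T" and xbd: "\<And>j. norm (x j) \<le> RS"
    and R0: "2 * RS < R0" "2 * B < R0" "B + \<epsilon> \<le> R0"
    and conv: "\<And>\<eta>. \<eta> > 0 \<Longrightarrow> eventually (\<lambda>N. \<forall>z. infdist z T \<ge> 2 * \<epsilon> \<and> norm z \<le> R0 \<longrightarrow>
                   norm ((\<Sum>j<N. 1 / (z - x j)) / of_nat N - m z) < \<eta>) sequentially"
    and cpos: "c > 0"
    and mlow: "\<And>z. infdist z T \<ge> 2 * \<epsilon> \<Longrightarrow> norm z \<le> R0 \<Longrightarrow> norm (m z) \<ge> c"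
    and k_bound: "\<And>n. k n \<le> K"
    and xi_bound: "\<And>n l. l \<in> {1..k n} \<Longrightarrow> norm (\<xi> n l) \<le> B"
    and eps_pos: "\<epsilon> > 0"
    and xi_loc: "eventually (\<lambda>n. s \<le> k n
        \<and> (\<forall>l\<in>{1..k n}. \<xi> n l \<notin> Nbhd \<mu> (3 * \<epsilon>) - Nbhd \<mu> \<epsilon>)
        \<and> (\<forall>l\<in>{1..s}. \<xi> n l \<notin> Nbhd \<mu> (3 * \<epsilon>))
        \<and> (\<forall>l\<in>{s+1..k n}. \<xi> n l \<in> Nbhd \<mu> \<epsilon>)) sequentially"
begin

lemma Nbhd_iff: "z \<in> Nbhd \<mu> e \<longleftrightarrow> infdist z T < e"
  by (simp add: Nbhd_def T_def)

definition Hn :: "nat \<Rightarrow> complex \<Rightarrow> complex" where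
  "Hn n z = (\<Sum>j<n - k n. 1 / (z - x j)) + (\<Sum>l\<in>{s+1..k n}. 1 / (z - \<xi> n l))"

lemma H_lower:
  "eventually (\<lambda>n. \<forall>z. infdist z T \<ge> 2 * \<epsilon> \<and> norm z \<le> R0 \<longrightarrow> norm (Hn n z) \<ge> real n * c / 2) sequentially"
proof -
  obtain N0 where N0: "\<And>N z. N \<ge> N0 \<Longrightarrow> infdist z T \<ge> 2 * \<epsilon> \<Longrightarrow> norm z \<le> R0 \<Longrightarrow>
        norm ((\<Sum>j<N. 1 / (z - x j)) / of_nat N - m z) < c / 4"
    using conv[of "c/4"] cpos unfolding eventually_sequentially by auto
  obtain N2 where N2: "\<And>n. n \<ge> N2 \<Longrightarrow> s \<le> k n \<and> (\<forall>l\<in>{s+1..k n}. \<xi> n l \<in> Nbhd \<mu> \<epsilon>)"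
    using xi_loc unfolding eventually_sequentially by blast
  define N1 where "N1 = max (max (N0 + K) N2) (nat \<lceil>3 * real K + 4 * real K / (\<epsilon> * c)\<rceil>)"
  show ?thesis unfolding eventually_sequentially
  proof (intro exI allI impI)
    fix n z assume n: "N1 \<le> n" and z: "infdist z T \<ge> 2 * \<epsilon> \<and> norm z \<le> R0"
    define N where "N = n - k n"
    have kn: "k n \<le> K" by (rule k_bound)
    have NN0: "N \<ge> N0" using n kn unfolding N_def N1_def by linarith
    have RN: "real N \<ge> real n - real K" using kn unfolding N_def by linarith
    have nbig: "real n \<ge> 3 * real K + 4 * real K / (\<epsilon> * c)"
    proof -
      have "3 * real K + 4 * real K / (\<epsilon> * c) \<le> real (nat \<lceil>3 * real K + 4 * real K / (\<epsilon> * c)\<rceil>)"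
        by linarith
      also have "\<dots> \<le> real n" using n unfolding N1_def by linarith
      finally show ?thesis .
    qed
    have loc: "\<forall>l\<in>{s+1..k n}. \<xi> n l \<in> Nbhd \<mu> \<epsilon>" using N2 n unfolding N1_def by auto
    have S1: "norm (\<Sum>j<N. 1 / (z - x j)) \<ge> real N * (3 * c / 4)"
    proof (cases "N = 0")
      case True then show ?thesis by simp
    next
      case False
      have a: "norm ((\<Sum>j<N. 1 / (z - x j)) / of_nat N - m z) < c / 4" using N0[OF NN0] z by auto
      have "norm (m z) \<ge> c" using mlow z by auto
      then have "norm ((\<Sum>j<N. 1 / (z - x j)) / of_nat N) \<ge> 3 * c / 4"
        using a norm_triangle_ineq2[of "m z" "(\<Sum>j<N. 1 / (z - x j)) / of_nat N"]
        by (simp add: norm_minus_commute)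
      then have "norm (\<Sum>j<N. 1 / (z - x j)) / real N \<ge> 3 * c / 4" by (simp add: norm_divide)
      then show ?thesis using False by (simp add: field_simps)
    qed
    have S2: "norm (\<Sum>l\<in>{s+1..k n}. 1 / (z - \<xi> n l)) \<le> real K / \<epsilon>"
    proof -
      have "norm (\<Sum>l\<in>{s+1..k n}. 1 / (z - \<xi> n l)) \<le> (\<Sum>l\<in>{s+1..k n}. norm (1 / (z - \<xi> n l)))"
        by (rule norm_sum)
      also have "\<dots> \<le> (\<Sum>l\<in>{s+1..k n}. 1 / \<epsilon>)"
      proof (rule sum_mono)
        fix l assume l: "l \<in> {s+1..k n}"
        have "infdist (\<xi> n l) T < \<epsilon>" using loc l Nbhd_iff by auto
        moreover have "infdist z T \<le> infdist (\<xi> n l) T + dist z (\<xi> n l)" by (rule infdist_triangle)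
        ultimately have "dist z (\<xi> n l) > \<epsilon>" using z by linarith
        then have "norm (z - \<xi> n l) \<ge> \<epsilon>" by (simp add: dist_norm)
        then show "norm (1 / (z - \<xi> n l)) \<le> 1 / \<epsilon>" using eps_pos by (simp add: norm_divide frac_le)
      qed
      also have "\<dots> = real (card {s+1..k n}) / \<epsilon>" by simp
      also have "\<dots> \<le> real K / \<epsilon>"
        using kn eps_pos by (intro divide_right_mono) auto
      finally show ?thesis .
    qed
    have "norm (Hn n z) \<ge> norm (\<Sum>j<N. 1 / (z - x j)) - norm (\<Sum>l\<in>{s+1..k n}. 1 / (z - \<xi> n l))"
      unfolding Hn_def N_def by (rule norm_diff_ineq[THEN order.trans[rotated]]) (simp add: norm_triangle_ineq4 norm_diff_ineq)
    moreover have "real N * (3 * c / 4) \<ge> (real n - real K) * (3 * c / 4)"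
      using RN cpos by (intro mult_right_mono) auto
    moreover have "(real n - real K) * (3 * c / 4) - real K / \<epsilon> \<ge> real n * c / 2"
    proof -
      have "real n * (\<epsilon> * c) \<ge> (3 * real K + 4 * real K / (\<epsilon> * c)) * (\<epsilon> * c)"
        using nbig eps_pos cpos by (intro mult_right_mono) auto
      also have "(3 * real K + 4 * real K / (\<epsilon> * c)) * (\<epsilon> * c) = 3 * real K * \<epsilon> * c + 4 * real K"
        using eps_pos cpos by (simp add: field_simps)
      finally have "real n * \<epsilon> * c \<ge> 3 * real K * \<epsilon> * c + 4 * real K" by (simp add: mult.assoc)
      then have "(real n - real K) * (3 * c / 4) * \<epsilon> - real K \<ge> real n * c / 2 * \<epsilon>"
        by (simp add: algebra_simps)
      then show ?thesis using eps_pos by (simp add: field_simps)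
    qed
    ultimately show "norm (Hn n z) \<ge> real n * c / 2" using S1 S2 by linarith
  qed
qed


lemma prod_split:
  assumes "s \<le> kk"
  shows "(\<Prod>l\<in>{1..kk}. [:- \<xi> n l, 1:]) = (\<Prod>l\<in>{1..s}. [:- \<xi> n l, 1:]) * (\<Prod>l\<in>{s+1..kk}. [:- \<xi> n l, 1:])"
proof -
  have "{1..kk} = {1..s} \<union> {s+1..kk}" using assms by auto
  moreover have "{1..s} \<inter> {s+1..kk} = {}" by auto
  ultimately show ?thesis by (simp add: prod.union_disjoint)
qed

lemma poly_prod_nz:
  fixes a :: "'i \<Rightarrow> complex"
  assumes "finite I" "\<forall>i\<in>I. z \<noteq> a i"
  shows "poly (\<Prod>i\<in>I. [:- a i, 1:]) z \<noteq> 0"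
  using assms by (simp add: poly_prod)

lemma step_delta:
  assumes dpos: "\<delta> > 0"
  shows "eventually (\<lambda>n. \<exists>w. ((\<forall>l\<in>{1..s}. w l \<notin> Nbhd \<mu> (2 * \<epsilon>))
             \<and> (\<forall>z. z \<notin> Nbhd \<mu> (2 * \<epsilon>) \<longrightarrow>
                    count (image_mset w (mset_set {1..s})) z =
                    crit_mult ((\<Prod>j<n - k n. [:- x j, 1:]) * (\<Prod>l\<in>{1..k n}. [:- \<xi> n l, 1:])) z))
             \<and> (\<Sum>l\<in>{1..s}. norm (w l - \<xi> n l)) < \<delta>) sequentially"
proof -
  define \<delta>' where "\<delta>' = \<delta> / (real s + 1)"
  have d'pos: "\<delta>' > 0" using dpos by (simp add: \<delta>'_def)
  define \<rho> where "\<rho> = min \<delta>' \<epsilon>"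
  have \<rho>pos: "\<rho> > 0" using d'pos eps_pos by (simp add: \<rho>_def)
  define rmin where "rmin = \<rho> / 4 ^ (s * s + 1)"
  have rminpos: "rmin > 0" using \<rho>pos by (simp add: rmin_def)
  define Nb where "Nb = nat \<lceil>2 * real s / (c * rmin)\<rceil> + 1 + K"
  have ev: "eventually (\<lambda>n. (\<forall>z. infdist z T \<ge> 2 * \<epsilon> \<and> norm z \<le> R0 \<longrightarrow> norm (Hn n z) \<ge> real n * c / 2)
       \<and> (s \<le> k n
        \<and> (\<forall>l\<in>{1..k n}. \<xi> n l \<notin> Nbhd \<mu> (3 * \<epsilon>) - Nbhd \<mu> \<epsilon>)
        \<and> (\<forall>l\<in>{1..s}. \<xi> n l \<notin> Nbhd \<mu> (3 * \<epsilon>))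
        \<and> (\<forall>l\<in>{s+1..k n}. \<xi> n l \<in> Nbhd \<mu> \<epsilon>)) \<and> n \<ge> Nb) sequentially"
    by (intro eventually_conj H_lower xi_loc eventually_ge_at_top)
  show ?thesis
  proof (rule eventually_mono[OF ev])
    fix n assume H: "(\<forall>z. infdist z T \<ge> 2 * \<epsilon> \<and> norm z \<le> R0 \<longrightarrow> norm (Hn n z) \<ge> real n * c / 2)
       \<and> (s \<le> k n
        \<and> (\<forall>l\<in>{1..k n}. \<xi> n l \<notin> Nbhd \<mu> (3 * \<epsilon>) - Nbhd \<mu> \<epsilon>)
        \<and> (\<forall>l\<in>{1..s}. \<xi> n l \<notin> Nbhd \<mu> (3 * \<epsilon>))
        \<and> (\<forall>l\<in>{s+1..k n}. \<xi> n l \<in> Nbhd \<mu> \<epsilon>)) \<and> n \<ge> Nb"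
    have Hb: "\<And>z. infdist z T \<ge> 2 * \<epsilon> \<Longrightarrow> norm z \<le> R0 \<Longrightarrow> norm (Hn n z) \<ge> real n * c / 2" using H by blast
    have sk: "s \<le> k n" using H by blast
    have far3: "infdist (\<xi> n l) T \<ge> 3 * \<epsilon>" if l: "l \<in> {1..s}" for l
    proof -
      have "\<xi> n l \<notin> Nbhd \<mu> (3 * \<epsilon>)" using H l by blast
      then show ?thesis unfolding Nbhd_iff by simp
    qed
    have near: "infdist (\<xi> n l) T < \<epsilon>" if l: "l \<in> {s+1..k n}" for l
    proof -
      have "\<xi> n l \<in> Nbhd \<mu> \<epsilon>" using H l by blast
      then show ?thesis unfolding Nbhd_iff by simp
    qed
    have nNb: "n \<ge> Nb" using H by blast
    have kn: "k n \<le> K" by (rule k_bound)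
    have nk: "k n \<le> n" using nNb kn unfolding Nb_def by linarith
    have n1: "n \<ge> 1" using nNb unfolding Nb_def by linarith
    obtain r where r1: "rmin \<le> r" and r2: "r \<le> \<rho> / 4"
      and gap: "\<forall>i\<in>{1..s}. \<forall>j\<in>{1..s}. dist (\<xi> n i) (\<xi> n j) < r \<or> dist (\<xi> n i) (\<xi> n j) \<ge> 4 * r"
      using gap_scale[of "{1..s}" s \<rho> "\<xi> n"] \<rho>pos unfolding rmin_def by auto
    have rpos: "r > 0" using r1 rminpos by linarith
    have r3: "3 * r \<le> \<delta>'" and r4: "2 * r \<le> \<epsilon>" using r2 \<rho>pos unfolding \<rho>_def by auto
    define L where "L = real n * c / 2"
    have Lr: "real (card {1..s}) < L * r"
    proof -
      have "2 * real s / (c * rmin) < real n" using nNb unfolding Nb_def by linarith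
      then have "2 * real s < real n * (c * rmin)" using cpos rminpos by (simp add: field_simps)
      then have "real s < L * rmin" unfolding L_def by (simp add: field_simps)
      also have "L * rmin \<le> L * r" using r1 cpos unfolding L_def by (intro mult_left_mono) auto
      finally show ?thesis by simp
    qed
    define A where "A = (\<Prod>j<n - k n. [:- x j, 1:])"
    define D where "D = (\<Prod>l\<in>{s+1..k n}. [:- \<xi> n l, 1:])"
    define C where "C = (\<Prod>l\<in>{1..s}. [:- \<xi> n l, 1:])"
    define E where "E = A * D"
    have peq: "(\<Prod>j<n - k n. [:- x j, 1:]) * (\<Prod>l\<in>{1..k n}. [:- \<xi> n l, 1:]) = E * C"
      unfolding E_def A_def C_def D_def prod_split[OF sk] by (simp add: algebra_simps)
    define W where "W = {z. infdist z T \<ge> 2 * \<epsilon> \<and> norm z \<le> R0}"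
    have xne: "z \<noteq> x j" if "infdist z T \<ge> 2 * \<epsilon>" for z j
    proof
      assume "z = x j"
      then have "infdist z T = 0" using xT by simp
      then show False using that eps_pos by simp
    qed
    have dne: "z \<noteq> \<xi> n l" if "infdist z T \<ge> 2 * \<epsilon>" "l \<in> {s+1..k n}" for z l
    proof
      assume "z = \<xi> n l"
      then show False using near[OF that(2)] that(1) eps_pos by simp
    qed
    have EW: "poly E z \<noteq> 0 \<and> L * norm (poly E z) \<le> norm (poly (pderiv E) z)" if zW: "z \<in> W" for z
    proof -
      have z1: "infdist z T \<ge> 2 * \<epsilon>" "norm z \<le> R0" using zW by (auto simp: W_def)
      have a1: "\<forall>j\<in>{..<n - k n}. z \<noteq> x j" using xne z1 by blast
      have a2: "\<forall>l\<in>{s+1..k n}. z \<noteq> \<xi> n l" using dne z1 by blast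
      have Enz: "poly E z \<noteq> 0" unfolding E_def A_def D_def poly_mult
        using poly_prod_nz[OF _ a1] poly_prod_nz[OF _ a2] by simp
      have "poly (pderiv E) z = poly E z * Hn n z"
        unfolding E_def A_def D_def Hn_def
        by (rule logderiv_mult[OF logderiv_prod_linear[OF _ a1] logderiv_prod_linear[OF _ a2]]) auto
      then have "norm (poly (pderiv E) z) = norm (poly E z) * norm (Hn n z)" by (simp add: norm_mult)
      moreover have "norm (Hn n z) \<ge> L" using Hb z1 unfolding L_def by blast
      ultimately have "L * norm (poly E z) \<le> norm (poly (pderiv E) z)"
        by (metis mult.commute mult_left_mono norm_ge_zero)
      then show ?thesis using Enz by blast
    qed
    have GL: "poly (pderiv (E * C)) z \<noteq> 0" if "infdist z T \<ge> 2 * \<epsilon>" "z \<notin> W" for z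
    proof -
      have zbig: "norm z > R0" using that by (auto simp: W_def)
      define \<rho>0 where "\<rho>0 = max RS B"
      have zb: "norm z > 2 * \<rho>0" using zbig R0 unfolding \<rho>0_def by auto
      have bx: "\<forall>j\<in>{..<n - k n}. norm (x j) \<le> \<rho>0" using xbd unfolding \<rho>0_def by (blast intro: max.coboundedI1)
      have bD: "\<forall>l\<in>{s+1..k n}. norm (\<xi> n l) \<le> \<rho>0"
        using xi_bound sk unfolding \<rho>0_def by (auto intro!: max.coboundedI2)
      have bC: "\<forall>l\<in>{1..s}. norm (\<xi> n l) \<le> \<rho>0"
        using xi_bound sk unfolding \<rho>0_def by (auto intro!: max.coboundedI2)
      have \<rho>0nn: "\<rho>0 \<ge> 0" unfolding \<rho>0_def using xbd[of 0] norm_ge_zero[of "x 0"] by linarith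
      have ne: "z \<noteq> a" if "norm a \<le> \<rho>0" for a using that zb \<rho>0nn by auto
      have a1: "\<forall>j\<in>{..<n - k n}. z \<noteq> x j" using bx ne by blast
      have a2: "\<forall>l\<in>{s+1..k n}. z \<noteq> \<xi> n l" using bD ne by blast
      have a3: "\<forall>l\<in>{1..s}. z \<noteq> \<xi> n l" using bC ne by blast
      define S1 where "S1 = (\<Sum>j<n - k n. 1 / (z - x j))"
      define S2 where "S2 = (\<Sum>l\<in>{s+1..k n}. 1 / (z - \<xi> n l))"
      define S3 where "S3 = (\<Sum>l\<in>{1..s}. 1 / (z - \<xi> n l))"
      have ld: "poly (pderiv (E * C)) z = poly (E * C) z * ((S1 + S2) + S3)"
        unfolding E_def A_def D_def C_def S1_def S2_def S3_def
        by (rule logderiv_mult[OF logderiv_mult[OF logderiv_prod_linear[OF _ a1] logderiv_prod_linear[OF _ a2]]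
              logderiv_prod_linear[OF _ a3]]) auto
      have PZ: "poly (E * C) z \<noteq> 0" unfolding E_def A_def D_def C_def poly_mult
        using poly_prod_nz[OF _ a1] poly_prod_nz[OF _ a2] poly_prod_nz[OF _ a3] by simp
      have q1: "Re (z * S1) \<ge> 0" "{..<n - k n} \<noteq> {} \<Longrightarrow> Re (z * S1) > 0"
        unfolding S1_def using Re_sum_pos_far[OF _ bx zb] by auto
      have q2: "Re (z * S2) \<ge> 0" "{s+1..k n} \<noteq> {} \<Longrightarrow> Re (z * S2) > 0"
        unfolding S2_def using Re_sum_pos_far[OF _ bD zb] by auto
      have q3: "Re (z * S3) \<ge> 0" "{1..s} \<noteq> {} \<Longrightarrow> Re (z * S3) > 0"
        unfolding S3_def using Re_sum_pos_far[OF _ bC zb] by auto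
      have "Re (z * ((S1 + S2) + S3)) > 0"
      proof -
        have "Re (z * ((S1 + S2) + S3)) = Re (z * S1) + Re (z * S2) + Re (z * S3)" by (simp add: algebra_simps)
        moreover have "Re (z * S1) > 0 \<or> Re (z * S2) > 0 \<or> Re (z * S3) > 0"
        proof (cases "n - k n = 0")
          case False
          then have "{..<n - k n} \<noteq> {}" by (simp add: lessThan_empty_iff)
          then show ?thesis using q1(2) by blast
        next
          case True
          then have "k n = n" using nk by simp
          then show ?thesis
          proof (cases "s = k n")
            case True
            then have "{1..s} \<noteq> {}" using n1 \<open>k n = n\<close> by auto
            then show ?thesis using q3(2) by blast
          next
            case False
            then have "{s+1..k n} \<noteq> {}" using sk by auto
            then show ?thesis using q2(2) by blast
          qed
        qed
        ultimately show ?thesis using q1(1) q2(1) q3(1) by linarith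
      qed
      then have "(S1 + S2) + S3 \<noteq> 0" by (intro notI) simp
      then show ?thesis unfolding ld using PZ by simp
    qed
    have ballW: "z \<in> W" if "l \<in> {1..s}" "dist z (\<xi> n l) \<le> 2 * r" for l z
    proof -
      have "infdist (\<xi> n l) T \<le> infdist z T + dist (\<xi> n l) z" by (rule infdist_triangle)
      then have "infdist z T \<ge> 2 * \<epsilon>" using far3[OF that(1)] that(2) r4 by (simp add: dist_commute)
      moreover have "norm z \<le> R0"
      proof -
        have "norm z \<le> norm (\<xi> n l) + norm (z - \<xi> n l)" by (rule norm_triangle_sub)
        moreover have "norm (\<xi> n l) \<le> B" using xi_bound that(1) sk by auto
        ultimately show ?thesis using that(2) r4 R0(3) by (simp add: dist_norm)
      qed
      ultimately show ?thesis by (simp add: W_def)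
    qed
    have ex: "\<exists>w. (\<forall>l\<in>{1..s}. infdist (w l) T \<ge> 2 * \<epsilon>)
           \<and> (\<forall>z. infdist z T \<ge> 2 * \<epsilon> \<longrightarrow> count (image_mset w (mset_set {1..s})) z = order z (pderiv (E * C)))
           \<and> (\<forall>l\<in>{1..s}. norm (w l - \<xi> n l) < \<delta>')"
    proof (rule core_count[where I="{1..s}" and \<xi>="\<xi> n" and W=W and Ou="\<lambda>z. infdist z T \<ge> 2 * \<epsilon>" and E=E and C=C and L=L and r=r and \<delta>=\<delta>'])
      show "finite {1..s}" by simp
      show "C = (\<Prod>l\<in>{1..s}. [:- \<xi> n l, 1:])" by (rule C_def)
      show "\<And>z. z \<in> W \<Longrightarrow> infdist z T \<ge> 2 * \<epsilon>" by (simp add: W_def)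
      show "\<And>z. infdist z T \<ge> 2 * \<epsilon> \<Longrightarrow> z \<notin> W \<Longrightarrow> poly (pderiv (E * C)) z \<noteq> 0" by (rule GL)
      show "\<And>z. z \<in> W \<Longrightarrow> poly E z \<noteq> 0 \<and> L * norm (poly E z) \<le> norm (poly (pderiv E) z)" by (rule EW)
      show "\<And>l z. l \<in> {1..s} \<Longrightarrow> dist z (\<xi> n l) \<le> 2 * r \<Longrightarrow> z \<in> W" by (rule ballW)
      show "\<forall>i\<in>{1..s}. \<forall>j\<in>{1..s}. dist (\<xi> n i) (\<xi> n j) < r \<or> dist (\<xi> n i) (\<xi> n j) \<ge> 4 * r" by (rule gap)
      show "r > 0" by (rule rpos)
      show "real (card {1..s}) < L * r" by (rule Lr)
      show "3 * r \<le> \<delta>'" by (rule r3)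
    qed
    then obtain w where w1: "\<forall>l\<in>{1..s}. infdist (w l) T \<ge> 2 * \<epsilon>"
      and w2: "\<forall>z. infdist z T \<ge> 2 * \<epsilon> \<longrightarrow> count (image_mset w (mset_set {1..s})) z = order z (pderiv (E * C))"
      and w3: "\<forall>l\<in>{1..s}. norm (w l - \<xi> n l) < \<delta>'"
      by blast
    have G1: "\<forall>l\<in>{1..s}. w l \<notin> Nbhd \<mu> (2 * \<epsilon>)" using w1 Nbhd_iff by auto
    have G2: "\<forall>z. z \<notin> Nbhd \<mu> (2 * \<epsilon>) \<longrightarrow>
                    count (image_mset w (mset_set {1..s})) z =
                    crit_mult ((\<Prod>j<n - k n. [:- x j, 1:]) * (\<Prod>l\<in>{1..k n}. [:- \<xi> n l, 1:])) z"
      unfolding peq crit_mult_def using w2 Nbhd_iff by auto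
    have G3: "(\<Sum>l\<in>{1..s}. norm (w l - \<xi> n l)) < \<delta>"
    proof (cases "s = 0")
      case True then show ?thesis using dpos by simp
    next
      case False
      have "(\<Sum>l\<in>{1..s}. norm (w l - \<xi> n l)) \<le> (\<Sum>l\<in>{1..s}. \<delta>')"
        using w3 by (intro sum_mono) (auto intro: less_imp_le)
      also have "\<dots> = real s * \<delta>'" by simp
      also have "\<dots> < \<delta>" unfolding \<delta>'_def using dpos by (simp add: field_simps)
      finally show ?thesis .
    qed
    show "\<exists>w. ((\<forall>l\<in>{1..s}. w l \<notin> Nbhd \<mu> (2 * \<epsilon>))
             \<and> (\<forall>z. z \<notin> Nbhd \<mu> (2 * \<epsilon>) \<longrightarrow>
                    count (image_mset w (mset_set {1..s})) z =
                    crit_mult ((\<Prod>j<n - k n. [:- x j, 1:]) * (\<Prod>l\<in>{1..k n}. [:- \<xi> n l, 1:])) z))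
             \<and> (\<Sum>l\<in>{1..s}. norm (w l - \<xi> n l)) < \<delta>"
      using G1 G2 G3 by blast
  qed
qed


lemma deterministic_final:
  "\<exists>w :: nat \<Rightarrow> nat \<Rightarrow> complex.
          eventually (\<lambda>n. (\<forall>l\<in>{1..s}. w n l \<notin> Nbhd \<mu> (2 * \<epsilon>))
             \<and> (\<forall>z. z \<notin> Nbhd \<mu> (2 * \<epsilon>) \<longrightarrow>
                    count (image_mset (w n) (mset_set {1..s})) z =
                    crit_mult ((\<Prod>j<n - k n. [:- x j, 1:]) * (\<Prod>l\<in>{1..k n}. [:- \<xi> n l, 1:])) z)) sequentially
        \<and> (\<forall>\<delta>>0. eventually (\<lambda>n. \<forall>l\<in>{1..s}. norm (w n l - \<xi> n l) < \<delta>) sequentially)"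
proof -
  obtain W where W1: "eventually (\<lambda>n. (\<forall>l\<in>{1..s}. W n l \<notin> Nbhd \<mu> (2 * \<epsilon>))
             \<and> (\<forall>z. z \<notin> Nbhd \<mu> (2 * \<epsilon>) \<longrightarrow>
                    count (image_mset (W n) (mset_set {1..s})) z =
                    crit_mult ((\<Prod>j<n - k n. [:- x j, 1:]) * (\<Prod>l\<in>{1..k n}. [:- \<xi> n l, 1:])) z)) sequentially"
    and W2: "\<forall>\<delta>>0. eventually (\<lambda>n. (\<Sum>l\<in>{1..s}. norm (W n l - \<xi> n l)) < \<delta>) sequentially"
    using diagonal_choice[OF step_delta] by blast
  have W3: "eventually (\<lambda>n. \<forall>l\<in>{1..s}. norm (W n l - \<xi> n l) < \<delta>) sequentially" if "\<delta> > 0" for \<delta>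
  proof (rule eventually_mono[OF W2[rule_format, OF that]])
    fix n assume S: "(\<Sum>l\<in>{1..s}. norm (W n l - \<xi> n l)) < \<delta>"
    show "\<forall>l\<in>{1..s}. norm (W n l - \<xi> n l) < \<delta>"
    proof
      fix l assume l: "l \<in> {1..s}"
      have "norm (W n l - \<xi> n l) \<le> (\<Sum>l\<in>{1..s}. norm (W n l - \<xi> n l))"
        by (rule member_le_sum) (use l in auto)
      then show "norm (W n l - \<xi> n l) < \<delta>" using S by linarith
    qed
  qed
  show ?thesis using W1 W3 by blast
qed

end

lemma hoeffding_step:
  fixes P :: "'w measure" and Y :: "nat \<Rightarrow> 'w \<Rightarrow> real"
  assumes P: "prob_space P"
    and Ym[measurable]: "\<And>j. Y j \<in> borel_measurable P"
    and ind: "prob_space.indep_vars P (\<lambda>_. borel) Y UNIV"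
    and dist: "\<And>j. distr P borel (Y j) = distr P borel (Y 0)"
    and bd: "\<And>j \<omega>. \<bar>Y j \<omega>\<bar> \<le> b"
    and t: "t > 0" and N: "N > 0"
  shows "measure P {\<omega>\<in>space P. \<bar>(\<Sum>i\<in>{..<N}. Y i \<omega>) / real N - prob_space.expectation P (Y 0)\<bar> \<ge> t}
          \<le> 2 * exp (- 2 * real N * t\<^sup>2 / ((b + 1) - (- (b + 1)))\<^sup>2)"
proof -
  interpret prob_space P by (rule P)
  interpret H: Hoeffding_ineq_iid P "{..<N}" Y "Y 0" "- (b + 1)" "b + 1" "expectation (Y 0)"
  proof unfold_locales
    show "finite {..<N}" by simp
    show "indep_vars (\<lambda>_. borel) Y {..<N}" by (rule indep_vars_subset[OF ind]) auto
    show "\<And>i. i \<in> {..<N} \<Longrightarrow> distr P borel (Y i) = distr P borel (Y 0)" by (rule dist)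
    show "random_variable borel (Y 0)" by simp
    show "AE x in P. Y 0 x \<in> {- (b + 1)..b + 1}"
    proof (intro AE_I2)
      fix x show "Y 0 x \<in> {- (b + 1)..b + 1}" using bd[of 0 x] by (auto simp: abs_le_iff)
    qed
  qed (rule reflexive)
  have "- (b + 1) < b + 1" using bd[of 0 undefined] by linarith
  from H.Hoeffding_ineq_abs_ge'[OF less_imp_le[OF t] this]
  show ?thesis using N by (simp only: card_lessThan lessThan_empty_iff)
qed

lemma slln_bounded:
  fixes P :: "'w measure" and Y :: "nat \<Rightarrow> 'w \<Rightarrow> real"
  assumes P: "prob_space P"
    and Ym[measurable]: "\<And>j. Y j \<in> borel_measurable P"
    and ind: "prob_space.indep_vars P (\<lambda>_. borel) Y UNIV"
    and dist: "\<And>j. distr P borel (Y j) = distr P borel (Y 0)"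
    and bd: "\<And>j \<omega>. \<bar>Y j \<omega>\<bar> \<le> b"
  shows "AE \<omega> in P. (\<lambda>N. (\<Sum>i<N. Y i \<omega>) / real N) \<longlonglongrightarrow> prob_space.expectation P (Y 0)"
proof -
  interpret prob_space P by (rule P)
  define E where "E = expectation (Y 0)"
  have ev: "AE \<omega> in P. eventually (\<lambda>N. \<bar>(\<Sum>i<N. Y i \<omega>) / real N - E\<bar> < t) sequentially" if t: "t > 0" for t
  proof -
    define A where "A N = {\<omega>\<in>space P. \<bar>(\<Sum>i\<in>{..<N}. Y i \<omega>) / real N - E\<bar> \<ge> t}" for N
    define \<kappa> where "\<kappa> = 2 * t\<^sup>2 / ((b + 1) - (- (b + 1)))\<^sup>2"
    have Am[measurable]: "A N \<in> sets P" for N unfolding A_def by measurable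
    have bnd: "measure P (A N) \<le> 2 * exp (- \<kappa>) ^ N" for N
    proof (cases "N = 0")
      case True
      have "measure P (A N) \<le> 1" by (rule prob_le_1)
      moreover have "2 * exp (- \<kappa>) ^ N = 2" using True by simp
      ultimately show ?thesis by linarith
    next
      case False
      have "measure P (A N) \<le> 2 * exp (- 2 * real N * t\<^sup>2 / ((b + 1) - (- (b + 1)))\<^sup>2)"
        unfolding A_def E_def using hoeffding_step[OF P Ym ind dist bd t] False by simp
      also have "- 2 * real N * t\<^sup>2 / ((b + 1) - (- (b + 1)))\<^sup>2 = real N * (- \<kappa>)"
        unfolding \<kappa>_def by (simp add: field_simps)
      also have "exp (real N * (- \<kappa>)) = exp (- \<kappa>) ^ N" by (rule exp_of_nat_mult)
      finally show ?thesis .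
    qed
    have "\<kappa> > 0"
    proof -
      have "(b + 1) - (- (b + 1)) > 0" using bd[of 0 undefined] by linarith
      then show ?thesis unfolding \<kappa>_def using t by (intro divide_pos_pos) auto
    qed
    then have "exp (- \<kappa>) < 1" by simp
    then have "summable (\<lambda>N. 2 * exp (- \<kappa>) ^ N)" by (intro summable_mult summable_geometric) auto
    then have sm: "summable (\<lambda>N. measure P (A N))"
      by (rule summable_comparison_test[rotated]) (use bnd in auto)
    have "AE \<omega> in P. eventually (\<lambda>N. \<omega> \<in> space P - A N) sequentially"
      by (rule borel_cantelli_AE1) (use sm in \<open>auto simp: emeasure_eq_measure\<close>)
    then show ?thesis
    proof (rule AE_mp[OF _ AE_I2[OF impI]])
      fix \<omega> assume \<omega>: "\<omega> \<in> space P" and e: "eventually (\<lambda>N. \<omega> \<in> space P - A N) sequentially"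
      show "eventually (\<lambda>N. \<bar>(\<Sum>i<N. Y i \<omega>) / real N - E\<bar> < t) sequentially"
        using e by (rule eventually_mono) (auto simp: A_def \<omega>)
    qed
  qed
  have "AE \<omega> in P. \<forall>m::nat. eventually (\<lambda>N. \<bar>(\<Sum>i<N. Y i \<omega>) / real N - E\<bar> < 1 / (real m + 1)) sequentially"
    unfolding AE_all_countable using ev by simp
  then show ?thesis
  proof (rule AE_mp[OF _ AE_I2[OF impI]])
    fix \<omega> assume H: "\<forall>m::nat. eventually (\<lambda>N. \<bar>(\<Sum>i<N. Y i \<omega>) / real N - E\<bar> < 1 / (real m + 1)) sequentially"
    show "(\<lambda>N. (\<Sum>i<N. Y i \<omega>) / real N) \<longlonglongrightarrow> expectation (Y 0)"
      unfolding E_def[symmetric] tendsto_iff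
    proof (intro allI impI)
      fix e :: real assume e: "e > 0"
      obtain m :: nat where m0: "inverse (real (Suc m)) < e" using reals_Archimedean[OF e] by blast
      then have m: "1 / (real m + 1) < e" by (simp add: inverse_eq_divide add.commute)
      show "eventually (\<lambda>N. dist ((\<Sum>i<N. Y i \<omega>) / real N) E < e) sequentially"
        using H[rule_format, of m] by (rule eventually_mono) (use m in \<open>auto simp: dist_real_def\<close>)
    qed
  qed
qed

definition Dq :: "complex set" where "Dq = (\<lambda>(a,b). Complex a b) ` (\<rat> \<times> \<rat>)"

lemma countable_Dq: "countable Dq"
  unfolding Dq_def by (intro countable_image countable_SIGMA countable_rat)

lemma Dq_dense:
  assumes "e > 0"
  shows "\<exists>q\<in>Dq. dist z q < e"
proof -
  obtain a where a: "a \<in> \<rat>" "Re z - e/2 < a" "a < Re z" using Rats_dense_in_real[of "Re z - e/2" "Re z"] assms by auto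
  obtain b where b: "b \<in> \<rat>" "Im z - e/2 < b" "b < Im z" using Rats_dense_in_real[of "Im z - e/2" "Im z"] assms by auto
  define q where "q = Complex a b"
  have "q \<in> Dq" unfolding Dq_def q_def using a b by auto
  moreover have "dist z q < e"
  proof -
    have "dist z q = norm (z - q)" by (simp add: dist_norm)
    also have "\<dots> \<le> \<bar>Re (z - q)\<bar> + \<bar>Im (z - q)\<bar>" by (rule cmod_le)
    also have "\<dots> < e" using a b by (simp add: q_def)
    finally show ?thesis .
  qed
  ultimately show ?thesis by blast
qed

definition gfun :: "complex set \<Rightarrow> complex \<Rightarrow> complex \<Rightarrow> complex" where
  "gfun S z x = (if x \<in> S then 1 / (z - x) else 0)"

lemma gfun_meas:
  assumes "closed S"
  shows "gfun S z \<in> borel_measurable borel"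
proof -
  have [measurable]: "S \<in> sets borel" using assms by (rule borel_closed)
  show ?thesis unfolding gfun_def by measurable
qed

lemma gfun_bound:
  assumes "infdist z S \<ge> e" "e > 0"
  shows "norm (gfun S z x) \<le> 1 / e"
proof (cases "x \<in> S")
  case True
  have "e \<le> dist z x" using infdist_le[OF True, of z] assms(1) by linarith
  then have "e \<le> norm (z - x)" by (simp add: dist_norm)
  then show ?thesis using True assms(2) by (simp add: gfun_def norm_divide frac_le)
next
  case False then show ?thesis using assms by (simp add: gfun_def)
qed

lemma gfun_lip:
  assumes "infdist z S \<ge> e" "infdist w S \<ge> e" "e > 0"
  shows "norm (gfun S z x - gfun S w x) \<le> norm (z - w) / e\<^sup>2"
proof (cases "x \<in> S")
  case True
  have ez: "e \<le> norm (z - x)" using infdist_le[OF True, of z] assms(1) by (simp add: dist_norm)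
  have ew: "e \<le> norm (w - x)" using infdist_le[OF True, of w] assms(2) by (simp add: dist_norm)
  have nz: "z - x \<noteq> 0" "w - x \<noteq> 0" using ez ew assms(3) by auto
  have "gfun S z x - gfun S w x = (w - z) / ((z - x) * (w - x))"
    using True nz by (simp add: gfun_def field_simps)
  then have "norm (gfun S z x - gfun S w x) = norm (z - w) / (norm (z - x) * norm (w - x))"
    by (simp add: norm_divide norm_mult norm_minus_commute)
  also have "\<dots> \<le> norm (z - w) / (e * e)"
  proof -
    have p: "0 < norm (z - x) * norm (w - x) * (e * e)" using ez ew assms(3) by (intro mult_pos_pos) auto
    show ?thesis using ez ew assms(3) p by (intro divide_left_mono mult_mono) auto
  qed
  finally show ?thesis by (simp add: power2_eq_square)
next
  case False then show ?thesis by (simp add: gfun_def)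
qed

context
  fixes \<mu> :: "complex measure"
  assumes mu_prob: "prob_space \<mu>" and mu_borel: "sets \<mu> = sets borel" and mu_cpt: "compact (msupp \<mu>)"
begin

lemma S_closed: "closed (msupp \<mu>)" using mu_cpt by (rule compact_imp_closed)

lemma space_mu: "space \<mu> = UNIV" using sets_eq_imp_space_eq[OF mu_borel] by simp

lemma meas_mu: "f \<in> borel_measurable borel \<Longrightarrow> f \<in> borel_measurable \<mu>"
  by (simp add: measurable_cong_sets[OF mu_borel refl])

lemma sets_mu: "A \<in> sets borel \<Longrightarrow> A \<in> sets \<mu>" using mu_borel by simp

lemma S_null: "AE x in \<mu>. x \<in> msupp \<mu>"
proof -
  define I where "I = {(q, \<rho>). q \<in> Dq \<and> \<rho> \<in> \<rat> \<and> \<rho> > 0 \<and> emeasure \<mu> (ball q \<rho>) = 0}"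
  have cI: "countable I"
    by (rule countable_subset[of _ "Dq \<times> \<rat>"]) (auto simp: I_def intro: countable_SIGMA countable_Dq countable_rat)
  have nI: "(case i of (q, \<rho>) \<Rightarrow> ball q \<rho>) \<in> null_sets \<mu>" if "i \<in> I" for i
    using that by (auto simp: I_def null_sets_def intro: sets_mu)
  have U: "(\<Union>i\<in>I. case i of (q, \<rho>) \<Rightarrow> ball q \<rho>) \<in> null_sets \<mu>"
    by (rule null_sets_UN'[OF cI nI])
  have sub: "- msupp \<mu> \<subseteq> (\<Union>i\<in>I. case i of (q, \<rho>) \<Rightarrow> ball q \<rho>)"
  proof
    fix x assume "x \<in> - msupp \<mu>"
    then obtain r where r: "r > 0" "\<not> emeasure \<mu> (ball x r) > 0" unfolding msupp_def by auto
    then have r0: "emeasure \<mu> (ball x r) = 0" by (simp add: zero_less_iff_neq_zero)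
    obtain q where q: "q \<in> Dq" "dist x q < r / 3" using Dq_dense[of "r/3" x] r by auto
    obtain \<rho> where \<rho>: "\<rho> \<in> \<rat>" "r / 3 < \<rho>" "\<rho> < 2 * r / 3" using Rats_dense_in_real[of "r/3" "2*r/3"] r by auto
    have sb: "ball q \<rho> \<subseteq> ball x r"
    proof
      fix y assume "y \<in> ball q \<rho>"
      then have "dist q y < \<rho>" by simp
      moreover have "dist x y \<le> dist x q + dist q y" by (rule dist_triangle)
      ultimately show "y \<in> ball x r" using q \<rho> by simp
    qed
    have "emeasure \<mu> (ball q \<rho>) \<le> emeasure \<mu> (ball x r)"
      by (rule emeasure_mono[OF sb]) (auto intro: sets_mu)
    then have "emeasure \<mu> (ball q \<rho>) = 0" using r0 by simp
    then have "(q, \<rho>) \<in> I" using q \<rho> r unfolding I_def by auto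
    moreover have "x \<in> ball q \<rho>" using q \<rho> by (simp add: dist_commute)
    ultimately show "x \<in> (\<Union>i\<in>I. case i of (q, \<rho>) \<Rightarrow> ball q \<rho>)" by force
  qed
  show ?thesis
    by (rule AE_I'[OF U]) (use sub in auto)
qed

lemma S_nonempty: "msupp \<mu> \<noteq> {}"
proof
  assume "msupp \<mu> = {}"
  then have "AE x in \<mu>. False" using S_null by simp
  then show False using prob_space.AE_False[OF mu_prob] by simp
qed

lemma gfun_integrable: "infdist z (msupp \<mu>) \<ge> e \<Longrightarrow> e > 0 \<Longrightarrow> integrable \<mu> (gfun (msupp \<mu>) z)"
  by (rule finite_measure.integrable_const_bound[OF prob_space.finite_measure[OF mu_prob], of _ "1/e"])
     (auto intro!: AE_I2 gfun_bound meas_mu gfun_meas S_closed)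

lemma cauchy_eq:
  assumes "z \<notin> msupp \<mu>"
  shows "cauchy_transform \<mu> z = integral\<^sup>L \<mu> (gfun (msupp \<mu>) z)"
  unfolding cauchy_transform_def
proof (rule integral_cong_AE)
  show "(\<lambda>x. 1 / (z - x)) \<in> borel_measurable \<mu>" by (intro meas_mu) measurable
  show "gfun (msupp \<mu>) z \<in> borel_measurable \<mu>" by (intro meas_mu gfun_meas S_closed)
  show "AE x in \<mu>. 1 / (z - x) = gfun (msupp \<mu>) z x"
    using S_null by (rule AE_mp) (auto simp: gfun_def)
qed

lemma m_lip:
  assumes "infdist z (msupp \<mu>) \<ge> e" "infdist w (msupp \<mu>) \<ge> e" "e > 0"
  shows "norm (cauchy_transform \<mu> z - cauchy_transform \<mu> w) \<le> norm (z - w) / e\<^sup>2"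
proof -
  have zS: "z \<notin> msupp \<mu>" "w \<notin> msupp \<mu>" using assms by auto
  have iz: "integrable \<mu> (gfun (msupp \<mu>) z)" and iw: "integrable \<mu> (gfun (msupp \<mu>) w)"
    using gfun_integrable assms by auto
  have "cauchy_transform \<mu> z - cauchy_transform \<mu> w = integral\<^sup>L \<mu> (\<lambda>x. gfun (msupp \<mu>) z x - gfun (msupp \<mu>) w x)"
    unfolding cauchy_eq[OF zS(1)] cauchy_eq[OF zS(2)] by (rule Bochner_Integration.integral_diff[OF iz iw, symmetric])
  also have "norm \<dots> \<le> integral\<^sup>L \<mu> (\<lambda>x. norm (gfun (msupp \<mu>) z x - gfun (msupp \<mu>) w x))"
    by (rule integral_norm_bound)
  also have "\<dots> \<le> norm (z - w) / e\<^sup>2"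
    by (rule prob_space.integral_le_const[OF mu_prob]) (use iz iw gfun_lip[OF assms] in auto)
  finally show ?thesis .
qed

end

context
  fixes \<mu> :: "complex measure" and P :: "'w measure" and X :: "nat \<Rightarrow> 'w \<Rightarrow> complex"
  assumes mu_prob: "prob_space \<mu>"
    and mu_borel: "sets \<mu> = sets borel"
    and mu_cpt: "compact (msupp \<mu>)"
    and P_prob: "prob_space P"
    and X_rv[measurable]: "\<And>j. X j \<in> borel_measurable P"
    and X_indep: "prob_space.indep_vars P (\<lambda>_. borel) X UNIV"
    and X_distr: "\<And>j. distr P borel (X j) = \<mu>"
begin

lemma AE_inS: "AE \<omega> in P. \<forall>j. X j \<omega> \<in> msupp \<mu>"
proof -
  have Sb[measurable]: "msupp \<mu> \<in> sets borel" using S_closed[OF mu_prob mu_borel mu_cpt] by (rule borel_closed)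
  have "AE \<omega> in P. X j \<omega> \<in> msupp \<mu>" for j
  proof -
    have "AE x in distr P borel (X j). x \<in> msupp \<mu>" unfolding X_distr by (rule S_null[OF mu_prob mu_borel mu_cpt])
    then show ?thesis by (subst (asm) AE_distr_iff) auto
  qed
  then show ?thesis unfolding AE_all_countable by blast
qed

lemma slln_h:
  fixes h :: "complex \<Rightarrow> real"
  assumes hm[measurable]: "h \<in> borel_measurable borel" and hb: "\<And>y. \<bar>h y\<bar> \<le> b"
  shows "AE \<omega> in P. (\<lambda>N. (\<Sum>i<N. h (X i \<omega>)) / real N) \<longlonglongrightarrow> integral\<^sup>L \<mu> h"
proof -
  have dist: "distr P borel (\<lambda>\<omega>. h (X j \<omega>)) = distr \<mu> borel h" for j
  proof -
    have "distr P borel (h \<circ> X j) = distr (distr P borel (X j)) borel h"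
      by (rule distr_distr[symmetric]) auto
    then show ?thesis unfolding X_distr comp_def .
  qed
  have ind: "prob_space.indep_vars P (\<lambda>_. borel) (\<lambda>i \<omega>. h (X i \<omega>)) UNIV"
    using prob_space.indep_vars_compose2[OF P_prob X_indep, of "\<lambda>_. h" "\<lambda>_. borel"] by auto
  have E: "prob_space.expectation P (\<lambda>\<omega>. h (X 0 \<omega>)) = integral\<^sup>L \<mu> h"
  proof -
    have "integral\<^sup>L (distr P borel (X 0)) h = integral\<^sup>L P (\<lambda>\<omega>. h (X 0 \<omega>))"
      by (rule integral_distr) auto
    then show ?thesis unfolding X_distr by simp
  qed
  have "AE \<omega> in P. (\<lambda>N. (\<Sum>i<N. h (X i \<omega>)) / real N) \<longlonglongrightarrow> prob_space.expectation P (\<lambda>\<omega>. h (X 0 \<omega>))"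
    by (rule slln_bounded[OF P_prob _ ind]) (use dist hb in auto)
  then show ?thesis unfolding E .
qed

lemma AE_pointconv:
  assumes q: "q \<notin> msupp \<mu>"
  shows "AE \<omega> in P. (\<lambda>N. (\<Sum>j<N. gfun (msupp \<mu>) q (X j \<omega>)) / of_nat N) \<longlonglongrightarrow> cauchy_transform \<mu> q"
proof -
  define S where "S = msupp \<mu>"
  have Sc: "closed S" unfolding S_def by (rule S_closed[OF mu_prob mu_borel mu_cpt])
  have Sne: "S \<noteq> {}" unfolding S_def by (rule S_nonempty[OF mu_prob mu_borel mu_cpt])
  define e where "e = infdist q S"
  have epos: "e > 0" unfolding e_def using infdist_pos_not_in_closed[OF Sc Sne] q S_def by auto
  have gm[measurable]: "gfun S q \<in> borel_measurable borel" by (rule gfun_meas[OF Sc])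
  have gb: "norm (gfun S q y) \<le> 1 / e" for y by (rule gfun_bound) (use epos in \<open>auto simp: e_def\<close>)
  have gi: "integrable \<mu> (gfun S q)" unfolding S_def
    by (rule gfun_integrable[OF mu_prob mu_borel mu_cpt, of e]) (use epos in \<open>auto simp: e_def S_def\<close>)
  have mq: "cauchy_transform \<mu> q = integral\<^sup>L \<mu> (gfun S q)"
    unfolding S_def by (rule cauchy_eq[OF mu_prob mu_borel mu_cpt q])
  have re: "AE \<omega> in P. (\<lambda>N. (\<Sum>i<N. Re (gfun S q (X i \<omega>))) / real N) \<longlonglongrightarrow> integral\<^sup>L \<mu> (\<lambda>y. Re (gfun S q y))"
    by (rule slln_h[of _ "1/e"]) (use gb in \<open>auto intro: order_trans[OF abs_Re_le_cmod]\<close>)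
  have im: "AE \<omega> in P. (\<lambda>N. (\<Sum>i<N. Im (gfun S q (X i \<omega>))) / real N) \<longlonglongrightarrow> integral\<^sup>L \<mu> (\<lambda>y. Im (gfun S q y))"
    by (rule slln_h[of _ "1/e"]) (use gb in \<open>auto intro: order_trans[OF abs_Im_le_cmod]\<close>)
  have iRe: "integral\<^sup>L \<mu> (\<lambda>y. Re (gfun S q y)) = Re (cauchy_transform \<mu> q)"
    unfolding mq using gi by simp
  have iIm: "integral\<^sup>L \<mu> (\<lambda>y. Im (gfun S q y)) = Im (cauchy_transform \<mu> q)"
    unfolding mq using gi by simp
  show ?thesis
    using re im
  proof (eventually_elim)
    case (elim \<omega>)
    show ?case unfolding tendsto_complex_iff S_def[symmetric]
      using elim unfolding iRe iIm by (simp add: Re_sum Im_sum)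
  qed
qed

lemma AE_conv_Dq:
  "AE \<omega> in P. (\<forall>j. X j \<omega> \<in> msupp \<mu>) \<and>
     (\<forall>q\<in>Dq. q \<notin> msupp \<mu> \<longrightarrow> (\<lambda>N. (\<Sum>j<N. 1 / (q - X j \<omega>)) / of_nat N) \<longlonglongrightarrow> cauchy_transform \<mu> q)"
proof -
  have "AE \<omega> in P. \<forall>q\<in>Dq. q \<notin> msupp \<mu> \<longrightarrow> (\<lambda>N. (\<Sum>j<N. gfun (msupp \<mu>) q (X j \<omega>)) / of_nat N) \<longlonglongrightarrow> cauchy_transform \<mu> q"
    unfolding AE_ball_countable[OF countable_Dq]
  proof
    fix q assume "q \<in> Dq"
    show "AE \<omega> in P. q \<notin> msupp \<mu> \<longrightarrow> (\<lambda>N. (\<Sum>j<N. gfun (msupp \<mu>) q (X j \<omega>)) / of_nat N) \<longlonglongrightarrow> cauchy_transform \<mu> q"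
    proof (cases "q \<in> msupp \<mu>")
      case True then show ?thesis by simp
    next
      case False
      show ?thesis using AE_pointconv[OF False] by (rule AE_mp) (intro AE_I2 impI)
    qed
  qed
  then show ?thesis using AE_inS
  proof (eventually_elim)
    case (elim \<omega>)
    have eq: "gfun (msupp \<mu>) q (X j \<omega>) = 1 / (q - X j \<omega>)" for q j using elim(2) by (simp add: gfun_def)
    show ?case using elim unfolding eq by simp
  qed
qed

end

lemma avg_lip:
  fixes x :: "nat \<Rightarrow> complex" and S :: "complex set"
  assumes xS: "\<forall>j. x j \<in> S" and z: "infdist z S \<ge> e" and w: "infdist w S \<ge> e" and e: "e > 0"
  shows "norm ((\<Sum>j<N. 1 / (z - x j)) / of_nat N - (\<Sum>j<N. 1 / (w - x j)) / of_nat N) \<le> norm (z - w) / e\<^sup>2"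
proof (cases "N = 0")
  case True then show ?thesis by simp
next
  case False
  have "(\<Sum>j<N. 1 / (z - x j)) / of_nat N - (\<Sum>j<N. 1 / (w - x j)) / of_nat N
      = (\<Sum>j<N. gfun S z (x j) - gfun S w (x j)) / of_nat N"
    using xS by (simp add: gfun_def sum_subtractf diff_divide_distrib)
  also have "norm \<dots> = norm (\<Sum>j<N. gfun S z (x j) - gfun S w (x j)) / real N"
    by (simp add: norm_divide)
  also have "\<dots> \<le> (\<Sum>j<N. norm (gfun S z (x j) - gfun S w (x j))) / real N"
    by (intro divide_right_mono norm_sum) auto
  also have "\<dots> \<le> (\<Sum>j<N. norm (z - w) / e\<^sup>2) / real N"
    by (intro divide_right_mono sum_mono gfun_lip[OF z w e]) auto
  also have "\<dots> = norm (z - w) / e\<^sup>2" using False by simp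
  finally show ?thesis .
qed

lemma unif_conv:
  fixes x :: "nat \<Rightarrow> complex" and m :: "complex \<Rightarrow> complex" and S K :: "complex set"
  assumes xS: "\<forall>j. x j \<in> S"
    and pt: "\<forall>q\<in>Dq. q \<notin> S \<longrightarrow> (\<lambda>N. (\<Sum>j<N. 1 / (q - x j)) / of_nat N) \<longlonglongrightarrow> m q"
    and mlip: "\<And>z w. infdist z S \<ge> \<epsilon> \<Longrightarrow> infdist w S \<ge> \<epsilon> \<Longrightarrow> norm (m z - m w) \<le> norm (z - w) / \<epsilon>\<^sup>2"
    and eps: "\<epsilon> > 0" and Kc: "compact K" and KS: "\<And>z. z \<in> K \<Longrightarrow> infdist z S \<ge> 2 * \<epsilon>"
    and eta: "\<eta> > 0"
  shows "eventually (\<lambda>N. \<forall>z\<in>K. norm ((\<Sum>j<N. 1 / (z - x j)) / of_nat N - m z) < \<eta>) sequentially"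
proof -
  define \<rho> where "\<rho> = min \<epsilon> (\<eta> * \<epsilon>\<^sup>2 / 4)"
  have \<rho>pos: "\<rho> > 0" using eps eta by (simp add: \<rho>_def)
  have \<rho>e: "\<rho> \<le> \<epsilon>" by (simp add: \<rho>_def)
  have \<rho>q: "\<rho> / \<epsilon>\<^sup>2 \<le> \<eta> / 4"
  proof -
    have "\<rho> \<le> \<eta> * \<epsilon>\<^sup>2 / 4" by (simp add: \<rho>_def)
    then show ?thesis using eps by (simp add: field_simps)
  qed
  define C where "C = {q\<in>Dq. infdist q S \<ge> \<epsilon>}"
  have cover: "K \<subseteq> (\<Union>q\<in>C. ball q \<rho>)"
  proof
    fix z assume z: "z \<in> K"
    obtain q where q: "q \<in> Dq" "dist z q < \<rho>" using Dq_dense[OF \<rho>pos] by blast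
    have "infdist z S \<le> infdist q S + dist z q" by (rule infdist_triangle)
    then have "infdist q S \<ge> \<epsilon>" using KS[OF z] q(2) \<rho>e by linarith
    then have "q \<in> C" using q(1) by (simp add: C_def)
    moreover have "z \<in> ball q \<rho>" using q(2) by (simp add: dist_commute)
    ultimately show "z \<in> (\<Union>q\<in>C. ball q \<rho>)" by blast
  qed
  obtain C' where C'1: "C' \<subseteq> C" and C'2: "finite C'" and C'3: "K \<subseteq> (\<Union>q\<in>C'. ball q \<rho>)"
    using compactE_image[OF Kc _ cover] by blast
  have evq: "eventually (\<lambda>N. \<forall>q\<in>C'. norm ((\<Sum>j<N. 1 / (q - x j)) / of_nat N - m q) < \<eta> / 3) sequentially"
  proof (rule eventually_ball_finite[OF C'2], rule ballI)
    fix q assume "q \<in> C'"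
    then have qC: "q \<in> Dq" "infdist q S \<ge> \<epsilon>" using C'1 by (auto simp: C_def)
    have "q \<notin> S" using qC(2) eps by auto
    then have "(\<lambda>N. (\<Sum>j<N. 1 / (q - x j)) / of_nat N) \<longlonglongrightarrow> m q" using pt qC(1) by blast
    then have "eventually (\<lambda>N. dist ((\<Sum>j<N. 1 / (q - x j)) / of_nat N) (m q) < \<eta> / 3) sequentially"
      using eta by (intro tendstoD) auto
    then show "eventually (\<lambda>N. norm ((\<Sum>j<N. 1 / (q - x j)) / of_nat N - m q) < \<eta> / 3) sequentially"
      by (simp add: dist_norm)
  qed
  show ?thesis
  proof (rule eventually_mono[OF evq], rule ballI)
    fix N z assume H: "\<forall>q\<in>C'. norm ((\<Sum>j<N. 1 / (q - x j)) / of_nat N - m q) < \<eta> / 3" and z: "z \<in> K"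
    obtain q where q: "q \<in> C'" "z \<in> ball q \<rho>" using C'3 z by blast
    have qe: "infdist q S \<ge> \<epsilon>" using q(1) C'1 by (auto simp: C_def)
    have ze: "infdist z S \<ge> \<epsilon>" using KS[OF z] eps by linarith
    have dzq: "norm (z - q) < \<rho>" using q(2) by (simp add: dist_norm norm_minus_commute)
    define az where "az = (\<Sum>j<N. 1 / (z - x j)) / of_nat N"
    define aq where "aq = (\<Sum>j<N. 1 / (q - x j)) / of_nat N"
    have t1: "norm (az - aq) \<le> norm (z - q) / \<epsilon>\<^sup>2" unfolding az_def aq_def by (rule avg_lip[OF xS ze qe eps])
    have t2: "norm (aq - m q) < \<eta> / 3" using H q(1) unfolding aq_def by blast
    have t3: "norm (m q - m z) \<le> norm (q - z) / \<epsilon>\<^sup>2" by (rule mlip[OF qe ze])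
    have dd: "norm (z - q) / \<epsilon>\<^sup>2 \<le> \<rho> / \<epsilon>\<^sup>2" using dzq eps by (intro divide_right_mono) auto
    have "norm (az - m z) \<le> norm (az - aq) + norm (aq - m q) + norm (m q - m z)"
      using norm_triangle_ineq[of "az - aq" "aq - m q"] norm_triangle_ineq[of "az - aq + (aq - m q)" "m q - m z"]
      by simp
    also have "\<dots> < \<eta>" using t1 t2 t3 dd \<rho>q eta by (simp add: norm_minus_commute)
    finally show "norm ((\<Sum>j<N. 1 / (z - x j)) / of_nat N - m z) < \<eta>" unfolding az_def .
  qed
qed

lemma c_exists:
  fixes m :: "complex \<Rightarrow> complex"
  assumes Kc: "compact K" and cont: "continuous_on K m" and nz: "\<And>z. z \<in> K \<Longrightarrow> m z \<noteq> 0"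
  shows "\<exists>c>0. \<forall>z\<in>K. norm (m z) \<ge> c"
proof (cases "K = {}")
  case True then show ?thesis by (intro exI[of _ 1]) auto
next
  case False
  have "compact ((\<lambda>z. norm (m z)) ` K)"
    by (intro compact_continuous_image continuous_on_norm cont Kc)
  moreover have "(\<lambda>z. norm (m z)) ` K \<noteq> {}" using False by simp
  ultimately obtain s where s: "s \<in> (\<lambda>z. norm (m z)) ` K" "\<forall>t\<in>(\<lambda>z. norm (m z)) ` K. s \<le> t"
    using compact_attains_inf by blast
  then obtain z0 where "z0 \<in> K" "s = norm (m z0)" by auto
  then have "s > 0" using nz by simp
  then show ?thesis using s(2) by auto
qed

theorem mainTheorem5:
  fixes \<mu> :: "complex measure"
    and P :: "'w measure"
    and X :: "nat \<Rightarrow> 'w \<Rightarrow> complex"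
    and \<xi> :: "nat \<Rightarrow> nat \<Rightarrow> complex"
    and k :: "nat \<Rightarrow> nat"
    and K :: nat and B :: real and \<epsilon> :: real and s :: nat
  assumes mu_prob: "prob_space \<mu>"
    and mu_borel: "sets \<mu> = sets borel"
    and mu_cpt: "compact (msupp \<mu>)"
    and P_prob: "prob_space P"
    and X_rv: "\<And>j. X j \<in> borel_measurable P"
    and X_indep: "prob_space.indep_vars P (\<lambda>_. borel) X UNIV"
    and X_distr: "\<And>j. distr P borel (X j) = \<mu>"
    and k_bound: "\<And>n. k n \<le> K"
    and xi_bound: "\<And>n l. l \<in> {1..k n} \<Longrightarrow> norm (\<xi> n l) \<le> B"
    and eps_pos: "\<epsilon> > 0"
    and xi_loc: "eventually (\<lambda>n. s \<le> k n
        \<and> (\<forall>l\<in>{1..k n}. \<xi> n l \<notin> Nbhd \<mu> (3 * \<epsilon>) - Nbhd \<mu> \<epsilon>)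
        \<and> (\<forall>l\<in>{1..s}. \<xi> n l \<notin> Nbhd \<mu> (3 * \<epsilon>))
        \<and> (\<forall>l\<in>{s+1..k n}. \<xi> n l \<in> Nbhd \<mu> \<epsilon>)) sequentially"
  shows "AE \<omega> in P.
    (let p = (\<lambda>n. (\<Prod>j<n - k n. [:- X j \<omega>, 1:]) * (\<Prod>l\<in>{1..k n}. [:- \<xi> n l, 1:]))
     in \<exists>w :: nat \<Rightarrow> nat \<Rightarrow> complex.
          eventually (\<lambda>n. (\<forall>l\<in>{1..s}. w n l \<notin> Nbhd \<mu> (2 * \<epsilon>))
             \<and> (\<forall>z. z \<notin> Nbhd \<mu> (2 * \<epsilon>) \<longrightarrow>
                    count (image_mset (w n) (mset_set {1..s})) z = crit_mult (p n) z)) sequentially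
        \<and> (\<forall>\<delta>>0. eventually (\<lambda>n. \<forall>l\<in>{1..s}. norm (w n l - \<xi> n l) < \<delta>) sequentially))"
proof -
  define S where "S = msupp \<mu>"
  define T where "T = msupp \<mu> \<union> Mzeros \<mu>"
  define m where "m = cauchy_transform \<mu>"
  have Sc: "closed S" unfolding S_def by (rule S_closed[OF mu_prob mu_borel mu_cpt])
  have Sne: "S \<noteq> {}" unfolding S_def by (rule S_nonempty[OF mu_prob mu_borel mu_cpt])
  obtain RS where RS: "\<forall>x\<in>S. norm x \<le> RS"
    using compact_imp_bounded[OF mu_cpt] unfolding bounded_iff S_def by blast
  define R0 where "R0 = 2 * \<bar>RS\<bar> + 2 * \<bar>B\<bar> + \<epsilon> + 1"
  have R0a: "2 * RS < R0" and R0b: "2 * B < R0" and R0c: "B + \<epsilon> \<le> R0"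
    unfolding R0_def using eps_pos by auto
  define K where "K = {z. 2 * \<epsilon> \<le> infdist z T} \<inter> cball 0 R0"
  have Kc: "compact K"
  proof -
    have "closed {z. 2 * \<epsilon> \<le> infdist z T}"
      by (intro closed_Collect_le continuous_on_const continuous_on_infdist continuous_on_id)
    then show ?thesis unfolding K_def by (intro closed_Int_compact compact_cball)
  qed
  have ST: "S \<subseteq> T" unfolding S_def T_def by auto
  have KS: "infdist z S \<ge> 2 * \<epsilon>" if "z \<in> K" for z
  proof -
    have "infdist z T \<le> infdist z S" by (rule infdist_mono[OF ST Sne])
    then show ?thesis using that unfolding K_def by auto
  qed
  have mlip: "norm (m z - m w) \<le> norm (z - w) / \<epsilon>\<^sup>2" if "infdist z S \<ge> \<epsilon>" "infdist w S \<ge> \<epsilon>" for z w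
    unfolding m_def by (rule m_lip[OF mu_prob mu_borel mu_cpt]) (use that eps_pos in \<open>auto simp: S_def\<close>)
  have mcont: "continuous_on K m"
    unfolding continuous_on_iff
  proof (intro ballI allI impI)
    fix z e assume z: "z \<in> K" and e: "(0::real) < e"
    show "\<exists>d>0. \<forall>z'\<in>K. dist z' z < d \<longrightarrow> dist (m z') (m z) < e"
    proof (intro exI[of _ "e * \<epsilon>\<^sup>2"] conjI ballI impI)
      show "e * \<epsilon>\<^sup>2 > 0" using e eps_pos by simp
      fix z' assume z': "z' \<in> K" and d: "dist z' z < e * \<epsilon>\<^sup>2"
      have "dist (m z') (m z) \<le> norm (z' - z) / \<epsilon>\<^sup>2"
        unfolding dist_norm by (rule mlip) (use KS[OF z] KS[OF z'] eps_pos in auto)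
      also have "\<dots> < e" using d eps_pos by (simp add: dist_norm field_simps)
      finally show "dist (m z') (m z) < e" .
    qed
  qed
  have mnz: "m z \<noteq> 0" if "z \<in> K" for z
  proof
    assume m0: "m z = 0"
    have "infdist z T > 0" using that eps_pos unfolding K_def by auto
    then have "z \<notin> T" by auto
    then have "z \<notin> msupp \<mu>" "z \<notin> Mzeros \<mu>" unfolding T_def by auto
    then show False using m0 unfolding Mzeros_def m_def by auto
  qed
  obtain c where cpos: "c > 0" and cK: "\<forall>z\<in>K. norm (m z) \<ge> c"
    using c_exists[OF Kc mcont mnz] by blast
  have mlow: "norm (m z) \<ge> c" if "2 * \<epsilon> \<le> infdist z T" "norm z \<le> R0" for z
    using cK that unfolding K_def by auto
  have AE: "AE \<omega> in P. (\<forall>j. X j \<omega> \<in> msupp \<mu>) \<and>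
     (\<forall>q\<in>Dq. q \<notin> msupp \<mu> \<longrightarrow> (\<lambda>N. (\<Sum>j<N. 1 / (q - X j \<omega>)) / of_nat N) \<longlonglongrightarrow> cauchy_transform \<mu> q)"
    by (rule AE_conv_Dq[OF mu_prob mu_borel mu_cpt P_prob X_rv X_indep X_distr])
  show ?thesis
  proof (rule AE_mp[OF AE], intro AE_I2 impI)
    fix \<omega> assume H: "(\<forall>j. X j \<omega> \<in> msupp \<mu>) \<and>
     (\<forall>q\<in>Dq. q \<notin> msupp \<mu> \<longrightarrow> (\<lambda>N. (\<Sum>j<N. 1 / (q - X j \<omega>)) / of_nat N) \<longlonglongrightarrow> cauchy_transform \<mu> q)"
    have xS: "\<forall>j. X j \<omega> \<in> S" using H unfolding S_def by blast
    have xT: "\<And>j. X j \<omega> \<in> T" using xS ST by blast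
    have xbd: "\<And>j. norm (X j \<omega>) \<le> RS" using xS RS by blast
    have pt: "\<forall>q\<in>Dq. q \<notin> S \<longrightarrow> (\<lambda>N. (\<Sum>j<N. 1 / (q - X j \<omega>)) / of_nat N) \<longlonglongrightarrow> m q"
      using H unfolding S_def m_def by blast
    have conv: "eventually (\<lambda>N. \<forall>z. 2 * \<epsilon> \<le> infdist z T \<and> norm z \<le> R0 \<longrightarrow>
                   norm ((\<Sum>j<N. 1 / (z - X j \<omega>)) / of_nat N - m z) < \<eta>) sequentially" if eta: "\<eta> > 0" for \<eta>
    proof -
      have "eventually (\<lambda>N. \<forall>z\<in>K. norm ((\<Sum>j<N. 1 / (z - X j \<omega>)) / of_nat N - m z) < \<eta>) sequentially"
        by (rule unif_conv[OF xS pt mlip eps_pos Kc KS eta])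
      then show ?thesis by (rule eventually_mono) (auto simp: K_def)
    qed
    have ex: "\<exists>w. (\<forall>\<^sub>F n in sequentially.
           (\<forall>l\<in>{1..s}. w n l \<notin> Nbhd \<mu> (2 * \<epsilon>)) \<and>
           (\<forall>z. z \<notin> Nbhd \<mu> (2 * \<epsilon>) \<longrightarrow>
                count (image_mset (w n) (mset_set {1..s})) z =
                crit_mult ((\<Prod>j<n - k n. [:- X j \<omega>, 1:]) * (\<Prod>l = 1..k n. [:- \<xi> n l, 1:])) z)) \<and>
       (\<forall>\<delta>>0. \<forall>\<^sub>F n in sequentially. \<forall>l\<in>{1..s}. cmod (w n l - \<xi> n l) < \<delta>)"
      by (rule deterministic_final[OF T_def xT xbd R0a R0b R0c conv cpos mlow k_bound xi_bound eps_pos xi_loc])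
    show "let p = (\<lambda>n. (\<Prod>j<n - k n. [:- X j \<omega>, 1:]) * (\<Prod>l\<in>{1..k n}. [:- \<xi> n l, 1:]))
     in \<exists>w :: nat \<Rightarrow> nat \<Rightarrow> complex.
          eventually (\<lambda>n. (\<forall>l\<in>{1..s}. w n l \<notin> Nbhd \<mu> (2 * \<epsilon>))
             \<and> (\<forall>z. z \<notin> Nbhd \<mu> (2 * \<epsilon>) \<longrightarrow>
                    count (image_mset (w n) (mset_set {1..s})) z = crit_mult (p n) z)) sequentially
        \<and> (\<forall>\<delta>>0. eventually (\<lambda>n. \<forall>l\<in>{1..s}. norm (w n l - \<xi> n l) < \<delta>) sequentially)"
      unfolding Let_def by (rule ex)
  qed
qed

end
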